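(* Let $|D_4^3\rangle=(|0111\rangle+|1011\rangle+|1101\rangle+|1110\rangle)/2$ and $\rho_{4,3}(\gamma)=\mathcal E_\gamma^{\otimes4}(|D_4^3\rangle\langle D_4^3|)$, $\gamma\in[0,1]$. Then $\rho_{4,3}(\gamma)\in\mathcal S$ if and only if $\gamma\ge1/2$.
   Context: $\mathcal E_\gamma$ is single-qubit amplitude damping with Kraus operators $|0\rangle\langle0|+\sqrt{1-\gamma}|1\rangle\langle1|$ and $\sqrt\gamma|0\rangle\langle1|$. $\mathcal S$ is the four-qubit stabilizer polytope (convex hull of pure stabilizer states $C|0000\rangle$, $C$ Clifford). *)

theory Defs
  imports Complex_Main
begin

text \<open>Four-qubit operators are represented as functions nat => nat => complex;
  only the entries with both indices in {0..<16} are meaningful.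
  The computational basis state |b0 b1 b2 b3> has index 8*b0+4*b1+2*b2+b3
  (qubit 0 is the most significant bit).\<close>

type_synonym op4 = "nat \<Rightarrow> nat \<Rightarrow> complex"

definition bitq :: "nat \<Rightarrow> nat \<Rightarrow> nat" where
  "bitq q i = (i div 2 ^ (3 - q)) mod 2"

definition mmult :: "op4 \<Rightarrow> op4 \<Rightarrow> op4" where
  "mmult A B = (\<lambda>i j. \<Sum>k<16. A i k * B k j)"

definition id4 :: op4 where
  "id4 = (\<lambda>i j. if i = j then 1 else 0)"

definition hadamard :: "nat \<Rightarrow> nat \<Rightarrow> complex" where
  "hadamard a b = (if a = 1 \<and> b = 1 then -1 else 1) / complex_of_real (sqrt 2)"

definition phaseS :: "nat \<Rightarrow> nat \<Rightarrow> complex" where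
  "phaseS a b = (if a = b then (if a = 1 then \<i> else 1) else 0)"

definition on_qubit :: "nat \<Rightarrow> (nat \<Rightarrow> nat \<Rightarrow> complex) \<Rightarrow> op4" where
  "on_qubit q U = (\<lambda>i j. U (bitq q i) (bitq q j) *
      (if (\<forall>p<4. p \<noteq> q \<longrightarrow> bitq p i = bitq p j) then 1 else 0))"

definition cnot :: "nat \<Rightarrow> nat \<Rightarrow> op4" where
  "cnot c t = (\<lambda>i j. if (\<forall>p<4. bitq p i =
        (if p = t then (bitq t j + bitq c j) mod 2 else bitq p j)) then 1 else 0)"

text \<open>The Clifford group on four qubits: generated by H and S on each qubit and CNOT
  between any two distinct qubits (global phases are irrelevant for the states C|0000>).\<close>
inductive_set clifford4 :: "op4 set" where
  clifford_id: "id4 \<in> clifford4"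
| clifford_H: "C \<in> clifford4 \<Longrightarrow> q < 4 \<Longrightarrow> mmult (on_qubit q hadamard) C \<in> clifford4"
| clifford_S: "C \<in> clifford4 \<Longrightarrow> q < 4 \<Longrightarrow> mmult (on_qubit q phaseS) C \<in> clifford4"
| clifford_CNOT: "C \<in> clifford4 \<Longrightarrow> c < 4 \<Longrightarrow> t < 4 \<Longrightarrow> c \<noteq> t \<Longrightarrow>
     mmult (cnot c t) C \<in> clifford4"

definition stab_dm :: "op4 \<Rightarrow> op4" where
  "stab_dm C = (\<lambda>a b. C a 0 * cnj (C b 0))"

definition pure_stabilizer_states :: "op4 set" where
  "pure_stabilizer_states = stab_dm ` clifford4"

definition in_stabilizer_polytope :: "op4 \<Rightarrow> bool" where
  "in_stabilizer_polytope \<rho> \<longleftrightarrow>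
     (\<exists>n::nat. \<exists>w::nat \<Rightarrow> real. \<exists>\<sigma>::nat \<Rightarrow> op4.
        (\<forall>k<n. 0 \<le> w k \<and> \<sigma> k \<in> pure_stabilizer_states) \<and>
        (\<Sum>k<n. w k) = 1 \<and>
        (\<forall>a<16. \<forall>b<16. \<rho> a b = (\<Sum>k<n. complex_of_real (w k) * \<sigma> k a b)))"

definition kraus_ad :: "real \<Rightarrow> nat \<Rightarrow> nat \<Rightarrow> nat \<Rightarrow> complex" where
  "kraus_ad g k a b =
     (if k = 0 then (if a = 0 \<and> b = 0 then 1
                     else if a = 1 \<and> b = 1 then complex_of_real (sqrt (1 - g)) else 0)
      else (if a = 0 \<and> b = 1 then complex_of_real (sqrt g) else 0))"

definition kraus_ad4 :: "real \<Rightarrow> nat \<Rightarrow> op4" where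
  "kraus_ad4 g k = (\<lambda>i j. \<Prod>q<4. kraus_ad g (bitq q k) (bitq q i) (bitq q j))"

definition amp_damp4 :: "real \<Rightarrow> op4 \<Rightarrow> op4" where
  "amp_damp4 g \<rho> = (\<lambda>a b. \<Sum>k<16. \<Sum>i<16. \<Sum>j<16.
       kraus_ad4 g k a i * \<rho> i j * cnj (kraus_ad4 g k b j))"

definition dicke43 :: "nat \<Rightarrow> complex" where
  "dicke43 i = (if i \<in> {7, 11, 13, 14} then 1/2 else 0)"

definition rho43 :: "real \<Rightarrow> op4" where
  "rho43 g = amp_damp4 g (\<lambda>a b. dicke43 a * cnj (dicke43 b))"

end

theory Submission
  imports Defs
begin

unbundle bit_operations_syntax

lemma less16_cases: "(x::nat) < 16 \<Longrightarrow> x = 0 \<or> x = 1 \<or> x = 2 \<or> x = 3 \<or> x = 4 \<or> x = 5 \<or> x = 6 \<or> x = 7 \<or> x = 8 \<or> x = 9 \<or> x = 10 \<or> x = 11 \<or> x = 12 \<or> x = 13 \<or> x = 14 \<or> x = 15"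
  by (simp add: numeral_eq_Suc less_Suc_eq)

lemma less4_cases: "(x::nat) < 4 \<Longrightarrow> x = 0 \<or> x = 1 \<or> x = 2 \<or> x = 3"
  by (simp add: numeral_eq_Suc less_Suc_eq)

lemma sum16: "(\<Sum>k<16. (f::nat\<Rightarrow>'a::comm_monoid_add) k) = f 0 + f 1 + f 2 + f 3 + f 4 + f 5 + f 6 + f 7 + f 8 + f 9 + f 10 + f 11 + f 12 + f 13 + f 14 + f 15"
  by (simp add: numeral_eq_Suc)

lemma all4: "(\<forall>p<4. P p) \<longleftrightarrow> P 0 \<and> P 1 \<and> P 2 \<and> P (3::nat)"
proof
  assume "P 0 \<and> P 1 \<and> P 2 \<and> P (3::nat)"
  then show "\<forall>p<4. P p" using less4_cases by blast
qed simp

lemma bitq_bit: "bitq q x = (if bit x (3-q) then 1 else 0)"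
  by (simp add: bitq_def bit_iff_odd odd_iff_mod_2_eq_one)

lemma bitq_xor: "bitq q (x XOR y) = (bitq q x + bitq q y) mod 2"
  by (simp add: bitq_bit bit_xor_iff)

lemma bitq_01: "bitq q x = 0 \<or> bitq q x = 1"
  by (simp add: bitq_bit)

lemma bitq_le1: "bitq q x \<le> 1"
  by (simp add: bitq_bit)

lemma xor_lt16: "x < 16 \<Longrightarrow> y < 16 \<Longrightarrow> x XOR y < (16::nat)"
proof -
  assume a: "x < 16" "y<16"
  have "take_bit 4 x = x" "take_bit 4 y = y" using a by (simp_all add: take_bit_nat_eq_self_iff)
  then have "x XOR y = take_bit 4 (x XOR y)" by (simp add: take_bit_xor)
  also have "\<dots> < 2^4" by (rule take_bit_nat_less_exp)
  finally show ?thesis by simp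
qed

lemma bits_eq:
  assumes "x < 16" "y < 16" "\<forall>q<4. bitq q x = bitq q y"
  shows "x = (y::nat)"
proof (rule bit_eqI)
  fix n
  have tx: "take_bit 4 x = x" "take_bit 4 y = y" using assms by (simp_all add: take_bit_nat_eq_self_iff)
  show "bit x n = bit y n"
  proof (cases "n < 4")
    case True
    then have "3 - (3 - n) = n" by simp
    moreover have "3 - n < 4" by simp
    ultimately show ?thesis using assms(3)[rule_format, of "3-n"] by (simp add: bitq_bit split: if_splits)
  next
    case False
    then show ?thesis using tx by (metis bit_take_bit_iff)
  qed
qed

lemma bitq_e: "p < 4 \<Longrightarrow> q < 4 \<Longrightarrow> bitq p (2^(3-q)) = (if p = q then 1 else 0)"
  by (drule less4_cases, drule less4_cases, elim disjE) (simp_all add: bitq_def)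

lemma e_lt16: "q < 4 \<Longrightarrow> (2::nat)^(3-q) < 16"
  by (drule less4_cases, elim disjE) simp_all

lemma xor_cancel: "(x::nat) XOR y XOR y = x" "y XOR (y XOR x) = (x::nat)"
  by (simp_all add: xor.assoc[symmetric])

lemmas xor_ac = xor.assoc xor.commute xor.left_commute

lemma G1: "q < 4 \<Longrightarrow> x < 16 \<Longrightarrow> (\<Sum>k<16. on_qubit q U x k * v k) = U (bitq q x) (bitq q x) * v x + U (bitq q x) (1 - bitq q x) * v (x XOR 2^(3-q))"
  apply (simp only: sum16)
  apply (drule less4_cases, drule less16_cases)
  apply (elim disjE)
  apply (simp_all add: on_qubit_def all4 bitq_def numeral_3_eq_3[symmetric])
  done

definition pix :: "nat \<Rightarrow> nat \<Rightarrow> nat \<Rightarrow> nat" where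
  "pix c t x = x XOR (bitq c x * 2^(3-t))"

lemma bitq_mul_e: "p < 4 \<Longrightarrow> t < 4 \<Longrightarrow> b \<le> 1 \<Longrightarrow> bitq p (b * 2^(3-t)) = (if p = t then b else 0)"
proof (cases "b = 0")
  case False
  assume "p < 4" "t < 4" "b \<le> 1"
  then have "b = 1" using False by simp
  then show ?thesis using bitq_e[of p t] \<open>p<4\<close> \<open>t<4\<close> by simp
qed (simp add: bitq_def)

lemma bitq_pix: "p < 4 \<Longrightarrow> t < 4 \<Longrightarrow> bitq p (pix c t x) = (if p = t then (bitq t x + bitq c x) mod 2 else bitq p x)"
  using bitq_le1[of p x] bitq_mul_e[of p t "bitq c x"] bitq_le1[of c x] by (simp add: pix_def bitq_xor)

lemma pix_lt16: "x < 16 \<Longrightarrow> t < 4 \<Longrightarrow> pix c t x < 16"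
  unfolding pix_def
  apply (rule xor_lt16, assumption)
  using bitq_01[of c x] e_lt16[of t] by auto

lemma cnot_eq:
  assumes "c<4" "t<4" "c\<noteq>t" "x<16" "k<16"
  shows "cnot c t x k = (if k = pix c t x then 1 else 0)"
proof -
  have "(\<forall>p<4. bitq p x = (if p = t then (bitq t k + bitq c k) mod 2 else bitq p k)) \<longleftrightarrow> k = pix c t x"
  proof
    assume h: "\<forall>p<4. bitq p x = (if p = t then (bitq t k + bitq c k) mod 2 else bitq p k)"
    show "k = pix c t x"
    proof (rule bits_eq)
      show "k < 16" "pix c t x < 16" using assms pix_lt16 by auto
      show "\<forall>q<4. bitq q k = bitq q (pix c t x)"
      proof (intro allI impI)
        fix q :: nat assume "q < 4"
        have hc: "bitq c x = bitq c k" using h assms by auto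
        show "bitq q k = bitq q (pix c t x)"
          using h[rule_format, OF \<open>q<4\<close>] assms \<open>q<4\<close> hc bitq_01[of t k] bitq_01[of c k]
          by (auto simp: bitq_pix)
      qed
    qed
  next
    assume k: "k = pix c t x"
    show "\<forall>p<4. bitq p x = (if p = t then (bitq t k + bitq c k) mod 2 else bitq p k)"
    proof (intro allI impI)
      fix p :: nat assume "p<4"
      have hc: "bitq c k = bitq c x" using k assms by (simp add: bitq_pix)
      show "bitq p x = (if p = t then (bitq t k + bitq c k) mod 2 else bitq p k)"
        using assms \<open>p<4\<close> hc bitq_01[of t x] bitq_01[of c x] k
        by (auto simp: bitq_pix)
    qed
  qed
  then show ?thesis by (simp add: cnot_def)
qed

lemma G2: "c<4 \<Longrightarrow> t<4 \<Longrightarrow> c\<noteq>t \<Longrightarrow> x<16 \<Longrightarrow> (\<Sum>k<16. cnot c t x k * v k) = v (pix c t x)"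
proof -
  assume a: "c<4" "t<4" "c\<noteq>t" "x<16"
  have "(\<Sum>k<16. cnot c t x k * v k) = (\<Sum>k<16. if k = pix c t x then v k else 0)"
    by (rule sum.cong) (auto simp: cnot_eq a)
  also have "\<dots> = v (pix c t x)" using pix_lt16 a by simp
  finally show ?thesis .
qed

definition aff :: "nat set \<Rightarrow> bool" where
  "aff A \<longleftrightarrow> A \<subseteq> {..<16} \<and> (\<forall>x\<in>A. \<forall>y\<in>A. \<forall>z\<in>A. x XOR y XOR z \<in> A)"

definition DD :: "(nat \<Rightarrow> int) \<Rightarrow> nat \<Rightarrow> nat \<Rightarrow> nat \<Rightarrow> int" where
  "DD f x y z = f x - f y - f z + f (x XOR y XOR z)"

definition quadph :: "nat set \<Rightarrow> (nat \<Rightarrow> int) \<Rightarrow> bool" where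
  "quadph A f \<longleftrightarrow> (\<forall>x\<in>A. \<forall>y\<in>A. \<forall>z\<in>A. even (DD f x y z)) \<and>
     (\<forall>x\<in>A. \<forall>y\<in>A. \<forall>z\<in>A. \<forall>x'\<in>A. \<forall>y'\<in>A. \<forall>z'\<in>A.
        x XOR y = x' XOR y' \<longrightarrow> x XOR z = x' XOR z' \<longrightarrow> DD f x y z mod 4 = DD f x' y' z' mod 4)"

definition abit :: "nat set \<Rightarrow> (nat \<Rightarrow> int) \<Rightarrow> bool" where
  "abit A u \<longleftrightarrow> (\<forall>x\<in>A. u x = 0 \<or> u x = 1) \<and>
     (\<forall>x\<in>A. \<forall>y\<in>A. \<forall>z\<in>A. u (x XOR y XOR z) = (u x + u y + u z) mod 2)"

lemma affI: "A \<subseteq> {..<16} \<Longrightarrow> (\<And>x y z. x\<in>A \<Longrightarrow> y\<in>A \<Longrightarrow> z\<in>A \<Longrightarrow> x XOR y XOR z \<in> A) \<Longrightarrow> aff A"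
  unfolding aff_def by blast
lemma aff_lt: "aff A \<Longrightarrow> x \<in> A \<Longrightarrow> x < 16"
  unfolding aff_def by blast
lemma aff_xor: "aff A \<Longrightarrow> x \<in> A \<Longrightarrow> y \<in> A \<Longrightarrow> z \<in> A \<Longrightarrow> x XOR y XOR z \<in> A"
  unfolding aff_def by blast

lemma quadphI:
  assumes "\<And>x y z. x\<in>A \<Longrightarrow> y\<in>A \<Longrightarrow> z\<in>A \<Longrightarrow> even (DD f x y z)"
  and "\<And>x y z x' y' z'. x\<in>A \<Longrightarrow> y\<in>A \<Longrightarrow> z\<in>A \<Longrightarrow> x'\<in>A \<Longrightarrow> y'\<in>A \<Longrightarrow> z'\<in>A \<Longrightarrow>
        x XOR y = x' XOR y' \<Longrightarrow> x XOR z = x' XOR z' \<Longrightarrow> DD f x y z mod 4 = DD f x' y' z' mod 4"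
  shows "quadph A f"
  unfolding quadph_def using assms by blast

lemma quadph_even: "quadph A f \<Longrightarrow> x\<in>A \<Longrightarrow> y\<in>A \<Longrightarrow> z\<in>A \<Longrightarrow> even (DD f x y z)"
  unfolding quadph_def by blast

lemma quadph_mod: "quadph A f \<Longrightarrow> x\<in>A \<Longrightarrow> y\<in>A \<Longrightarrow> z\<in>A \<Longrightarrow> x'\<in>A \<Longrightarrow> y'\<in>A \<Longrightarrow> z'\<in>A \<Longrightarrow>
        x XOR y = x' XOR y' \<Longrightarrow> x XOR z = x' XOR z' \<Longrightarrow> DD f x y z mod 4 = DD f x' y' z' mod 4"
  unfolding quadph_def by blast

lemma abitI: "(\<And>x. x\<in>A \<Longrightarrow> u x = 0 \<or> u x = 1) \<Longrightarrow>
   (\<And>x y z. x\<in>A \<Longrightarrow> y\<in>A \<Longrightarrow> z\<in>A \<Longrightarrow> u (x XOR y XOR z) = (u x + u y + u z) mod 2) \<Longrightarrow> abit A u"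
  unfolding abit_def by blast
lemma abit_01: "abit A u \<Longrightarrow> x \<in> A \<Longrightarrow> u x = 0 \<or> u x = 1"
  unfolding abit_def by blast
lemma abit_xor: "abit A u \<Longrightarrow> x \<in> A \<Longrightarrow> y \<in> A \<Longrightarrow> z \<in> A \<Longrightarrow> u (x XOR y XOR z) = (u x + u y + u z) mod 2"
  unfolding abit_def by blast

lemma xor_swap: "(x::nat) XOR y = x' XOR y' \<Longrightarrow> y' = x' XOR x XOR y"
  by (metis xor.assoc xor_cancel(2))

lemma Q_add:
  assumes "quadph A f" "quadph A g" shows "quadph A (\<lambda>x. f x + g x)"
proof -
  have dd: "DD (\<lambda>x. f x + g x) x y z = DD f x y z + DD g x y z" for x y z by (simp add: DD_def)
  show ?thesis
  proof (rule quadphI)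
    fix x y z assume "x\<in>A" "y\<in>A" "z\<in>A"
    then have "even (DD f x y z)" "even (DD g x y z)" using assms quadph_even by blast+
    then show "even (DD (\<lambda>x. f x + g x) x y z)" unfolding dd by simp
  next
    fix x y z x' y' z' assume h: "x\<in>A" "y\<in>A" "z\<in>A" "x'\<in>A" "y'\<in>A" "z'\<in>A" "x XOR y = x' XOR y'" "x XOR z = x' XOR z'"
    have "DD f x y z mod 4 = DD f x' y' z' mod 4" "DD g x y z mod 4 = DD g x' y' z' mod 4"
      using assms h quadph_mod by blast+
    then show "DD (\<lambda>x. f x + g x) x y z mod 4 = DD (\<lambda>x. f x + g x) x' y' z' mod 4"
      unfolding dd by (metis mod_add_cong)
  qed
qed

lemma Q_smult:
  assumes "quadph A f" shows "quadph A (\<lambda>x. k * f x)"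
proof -
  have dd: "DD (\<lambda>x. k * f x) x y z = k * DD f x y z" for x y z by (simp add: DD_def algebra_simps)
  show ?thesis
  proof (rule quadphI)
    fix x y z assume "x\<in>A" "y\<in>A" "z\<in>A"
    then have "even (DD f x y z)" using assms quadph_even by blast
    then show "even (DD (\<lambda>x. k * f x) x y z)" unfolding dd by simp
  next
    fix x y z x' y' z' assume h: "x\<in>A" "y\<in>A" "z\<in>A" "x'\<in>A" "y'\<in>A" "z'\<in>A" "x XOR y = x' XOR y'" "x XOR z = x' XOR z'"
    have "DD f x y z mod 4 = DD f x' y' z' mod 4"
      using assms h quadph_mod by blast
    then show "DD (\<lambda>x. k * f x) x y z mod 4 = DD (\<lambda>x. k * f x) x' y' z' mod 4"
      unfolding dd by (metis mod_mult_cong)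
  qed
qed

lemma Q_comp:
  assumes qf: "quadph A f"
    and into: "\<And>x. x \<in> B \<Longrightarrow> s x \<in> A"
    and lin: "\<And>x y z. x\<in>B \<Longrightarrow> y\<in>B \<Longrightarrow> z\<in>B \<Longrightarrow> s (x XOR y XOR z) = s x XOR s y XOR s z"
  shows "quadph B (\<lambda>x. f (s x))"
proof -
  have dd: "DD (\<lambda>x. f (s x)) x y z = DD f (s x) (s y) (s z)" if "x\<in>B" "y\<in>B" "z\<in>B" for x y z
    using lin[OF that] by (simp add: DD_def)
  show ?thesis
  proof (rule quadphI)
    fix x y z assume h: "x\<in>B" "y\<in>B" "z\<in>B"
    then show "even (DD (\<lambda>x. f (s x)) x y z)" unfolding dd[OF h] using qf quadph_even into by blast
  next
    fix x y z x' y' z' assume h: "x\<in>B" "y\<in>B" "z\<in>B" "x'\<in>B" "y'\<in>B" "z'\<in>B" "x XOR y = x' XOR y'" "x XOR z = x' XOR z'"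
    have y': "y' = x' XOR x XOR y" using h(7) by (rule xor_swap)
    have z': "z' = x' XOR x XOR z" using h(8) by (rule xor_swap)
    have "s y' = s x' XOR s x XOR s y" unfolding y' using lin[of x' x y] h(1,2,4) by simp
    then have e1: "s x XOR s y = s x' XOR s y'" by (metis xor_swap)
    have "s z' = s x' XOR s x XOR s z" unfolding z' using lin[of x' x z] h(1,3,4) by simp
    then have e2: "s x XOR s z = s x' XOR s z'" by (metis xor_swap)
    have "DD f (s x) (s y) (s z) mod 4 = DD f (s x') (s y') (s z') mod 4"
      using quadph_mod[OF qf] into h e1 e2 by blast
    then show "DD (\<lambda>x. f (s x)) x y z mod 4 = DD (\<lambda>x. f (s x)) x' y' z' mod 4"
      using dd h by simp
  qed
qed

lemma Q_abit:
  assumes ab: "abit A u" shows "quadph A u"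
proof (rule quadphI)
  fix x y z assume h: "x\<in>A" "y\<in>A" "z\<in>A"
  have w: "u (x XOR y XOR z) = (u x + u y + u z) mod 2" using abit_xor[OF ab h] .
  have "u x = 0 \<or> u x = 1" "u y = 0 \<or> u y = 1" "u z = 0 \<or> u z = 1" using abit_01[OF ab] h by auto
  then show "even (DD u x y z)" unfolding DD_def w by auto
next
  fix x y z x' y' z' assume h: "x\<in>A" "y\<in>A" "z\<in>A" "x'\<in>A" "y'\<in>A" "z'\<in>A" "x XOR y = x' XOR y'" "x XOR z = x' XOR z'"
  have y': "y' = x' XOR x XOR y" using h(7) by (rule xor_swap)
  have z': "z' = x' XOR x XOR z" using h(8) by (rule xor_swap)
  have uy': "u y' = (u x' + u x + u y) mod 2" unfolding y' using abit_xor[OF ab, of x' x y] h by simp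
  have uz': "u z' = (u x' + u x + u z) mod 2" unfolding z' using abit_xor[OF ab, of x' x z] h by simp
  have w: "u (x XOR y XOR z) = (u x + u y + u z) mod 2" using abit_xor[OF ab] h by simp
  have w': "u (x' XOR y' XOR z') = (u x' + u y' + u z') mod 2" using abit_xor[OF ab] h by simp
  have "u x = 0 \<or> u x = 1" "u y = 0 \<or> u y = 1" "u z = 0 \<or> u z = 1" "u x' = 0 \<or> u x' = 1" using abit_01[OF ab] h by auto
  then show "DD u x y z mod 4 = DD u x' y' z' mod 4" unfolding DD_def w w' uy' uz' by auto
qed

lemma Q_2prod:
  assumes ab: "abit A u" and aw: "abit A w" shows "quadph A (\<lambda>x. 2 * u x * w x)"
proof (rule quadphI)
  fix x y z assume h: "x\<in>A" "y\<in>A" "z\<in>A"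
  show "even (DD (\<lambda>x. 2 * u x * w x) x y z)" unfolding DD_def by simp
next
  fix x y z x' y' z' assume h: "x\<in>A" "y\<in>A" "z\<in>A" "x'\<in>A" "y'\<in>A" "z'\<in>A" "x XOR y = x' XOR y'" "x XOR z = x' XOR z'"
  have y': "y' = x' XOR x XOR y" using h(7) by (rule xor_swap)
  have z': "z' = x' XOR x XOR z" using h(8) by (rule xor_swap)
  have uy': "u y' = (u x' + u x + u y) mod 2" unfolding y' using abit_xor[OF ab, of x' x y] h by simp
  have uz': "u z' = (u x' + u x + u z) mod 2" unfolding z' using abit_xor[OF ab, of x' x z] h by simp
  have u1: "u (x XOR y XOR z) = (u x + u y + u z) mod 2" using abit_xor[OF ab] h by simp
  have u2: "u (x' XOR y' XOR z') = (u x' + u y' + u z') mod 2" using abit_xor[OF ab] h by simp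
  have wy': "w y' = (w x' + w x + w y) mod 2" unfolding y' using abit_xor[OF aw, of x' x y] h by simp
  have wz': "w z' = (w x' + w x + w z) mod 2" unfolding z' using abit_xor[OF aw, of x' x z] h by simp
  have w1: "w (x XOR y XOR z) = (w x + w y + w z) mod 2" using abit_xor[OF aw] h by simp
  have w2: "w (x' XOR y' XOR z') = (w x' + w y' + w z') mod 2" using abit_xor[OF aw] h by simp
  have "u x = 0 \<or> u x = 1" "u y = 0 \<or> u y = 1" "u z = 0 \<or> u z = 1" "u x' = 0 \<or> u x' = 1"
       "w x = 0 \<or> w x = 1" "w y = 0 \<or> w y = 1" "w z = 0 \<or> w z = 1" "w x' = 0 \<or> w x' = 1"
    using abit_01[OF ab] abit_01[OF aw] h by auto
  then show "DD (\<lambda>x. 2 * u x * w x) x y z mod 4 = DD (\<lambda>x. 2 * u x * w x) x' y' z' mod 4"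
    unfolding DD_def u1 u2 w1 w2 uy' uz' wy' wz' by (elim disjE) simp_all
qed


lemma abit_bitq: "abit A (\<lambda>x. int (bitq q x))"
proof (rule abitI)
  fix x y z
  have "int (bitq q (x XOR y XOR z)) = (int (bitq q x) + (int (bitq q y) + int (bitq q z)) mod 2) mod 2"
    by (simp add: bitq_xor zmod_int)
  then show "int (bitq q (x XOR y XOR z)) = (int (bitq q x) + int (bitq q y) + int (bitq q z)) mod 2"
    by presburger
qed (use bitq_01 in auto)

lemma abit_comp:
  assumes ab: "abit A u"
    and into: "\<And>x. x \<in> B \<Longrightarrow> s x \<in> A"
    and lin: "\<And>x y z. x\<in>B \<Longrightarrow> y\<in>B \<Longrightarrow> z\<in>B \<Longrightarrow> s (x XOR y XOR z) = s x XOR s y XOR s z"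
  shows "abit B (\<lambda>x. u (s x))"
  by (rule abitI) (use abit_01[OF ab] into abit_xor[OF ab] lin in auto)

definition ipow :: "int \<Rightarrow> complex" where "ipow e = \<i> ^ nat (e mod 4)"

lemma i_pow_mod4: "\<i> ^ n = \<i> ^ (n mod 4)"
proof -
  have "\<i> ^ n = \<i> ^ (4 * (n div 4) + n mod 4)" by simp
  also have "\<dots> = (\<i>^4)^(n div 4) * \<i>^(n mod 4)" by (simp only: power_add power_mult)
  also have "\<dots> = \<i>^(n mod 4)" by simp
  finally show ?thesis .
qed

lemma ipow_add: "ipow (a + b) = ipow a * ipow b"
proof -
  have "ipow a * ipow b = \<i> ^ (nat (a mod 4) + nat (b mod 4))" by (simp add: ipow_def power_add)
  also have "\<dots> = \<i> ^ ((nat (a mod 4) + nat (b mod 4)) mod 4)" by (rule i_pow_mod4)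
  also have "(nat (a mod 4) + nat (b mod 4)) mod 4 = nat ((a+b) mod 4)"
  proof -
    have "nat (a mod 4) + nat (b mod 4) = nat (a mod 4 + b mod 4)" by (simp add: nat_add_distrib)
    moreover have "nat (a mod 4 + b mod 4) mod 4 = nat ((a mod 4 + b mod 4) mod 4)"
      by (simp add: nat_mod_distrib)
    moreover have "(a mod 4 + b mod 4) mod 4 = (a + b) mod 4" by (simp add: mod_add_eq)
    ultimately show ?thesis by simp
  qed
  finally show ?thesis by (simp add: ipow_def)
qed

lemma ipow_0[simp]: "ipow 0 = 1" and ipow_1[simp]: "ipow 1 = \<i>" and ipow_2[simp]: "ipow 2 = -1" and ipow_3[simp]: "ipow 3 = -\<i>"
  by (simp_all add: ipow_def power3_eq_cube)

lemma ipow_mod: "ipow (a mod 4) = ipow a"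
  by (simp add: ipow_def)

lemma norm_ipow[simp]: "cmod (ipow e) = 1"
  by (simp add: ipow_def norm_power)

definition Inv :: "(nat \<Rightarrow> complex) \<Rightarrow> bool" where
  "Inv v \<longleftrightarrow> (\<exists>A f c. aff A \<and> quadph A f \<and> (\<forall>x<16. v x = (if x \<in> A then c * ipow (f x) else 0)))"

lemma InvI: "aff A \<Longrightarrow> quadph A f \<Longrightarrow> (\<And>x. x<16 \<Longrightarrow> v x = (if x \<in> A then c * ipow (f x) else 0)) \<Longrightarrow> Inv v"
  unfolding Inv_def by blast

lemma Inv_S:
  assumes "Inv v" "q<4" shows "Inv (\<lambda>x. \<Sum>k<16. on_qubit q phaseS x k * v k)"
proof -
  obtain A f c where h: "aff A" "quadph A f" "\<forall>x<16. v x = (if x \<in> A then c * ipow (f x) else 0)"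
    using assms(1) Inv_def by auto
  have qf: "quadph A (\<lambda>x. f x + int (bitq q x))" by (rule Q_add[OF h(2) Q_abit[OF abit_bitq]])
  show ?thesis
  proof (rule InvI[OF h(1) qf])
    fix x :: nat assume x: "x<16"
    have "(\<Sum>k<16. on_qubit q phaseS x k * v k) = phaseS (bitq q x) (bitq q x) * v x + phaseS (bitq q x) (1 - bitq q x) * v (x XOR 2^(3-q))"
      by (rule G1[OF assms(2) x])
    also have "\<dots> = ipow (int (bitq q x)) * v x" using bitq_01[of q x] by (auto simp: phaseS_def)
    finally show "(\<Sum>k<16. on_qubit q phaseS x k * v k) = (if x \<in> A then c * ipow (f x + int (bitq q x)) else 0)"
      using h(3) x by (simp add: ipow_add)
  qed
qed

lemma mod2_eq: "(a::nat) mod 2 = b mod 2 \<longleftrightarrow> (even a \<longleftrightarrow> even b)"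
  by presburger

lemma even_mod2: "even ((a::nat) mod 2) \<longleftrightarrow> even a"
  by presburger

lemma pix_lin:
  assumes "x<16" "y<16" "z<16" "c<4" "t<4" "c\<noteq>t"
  shows "pix c t (x XOR y XOR z) = pix c t x XOR pix c t y XOR pix c t z"
proof (rule bits_eq)
  show "pix c t (x XOR y XOR z) < 16" using assms by (simp add: pix_lt16 xor_lt16)
  show "pix c t x XOR pix c t y XOR pix c t z < 16" using assms by (simp add: pix_lt16 xor_lt16)
  show "\<forall>q<4. bitq q (pix c t (x XOR y XOR z)) = bitq q (pix c t x XOR pix c t y XOR pix c t z)"
  proof (intro allI impI)
    fix p :: nat assume p: "p < 4"
    show "bitq p (pix c t (x XOR y XOR z)) = bitq p (pix c t x XOR pix c t y XOR pix c t z)"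
      using p assms by (simp add: bitq_pix bitq_xor mod2_eq even_mod2) argo
  qed
qed

lemma Inv_CX:
  assumes "Inv v" "c<4" "t<4" "c\<noteq>t" shows "Inv (\<lambda>x. \<Sum>k<16. cnot c t x k * v k)"
proof -
  obtain A f a where h: "aff A" "quadph A f" "\<forall>x<16. v x = (if x \<in> A then a * ipow (f x) else 0)"
    using assms(1) Inv_def by auto
  define B where "B = {x. x < 16 \<and> pix c t x \<in> A}"
  have affB: "aff B"
  proof (rule affI)
    show "B \<subseteq> {..<16}" unfolding B_def by auto
    fix x y z assume "x\<in>B" "y\<in>B" "z\<in>B"
    then show "x XOR y XOR z \<in> B" unfolding B_def using pix_lin assms aff_xor[OF h(1)] xor_lt16 by auto
  qed
  have qB: "quadph B (\<lambda>x. f (pix c t x))"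
    by (rule Q_comp[OF h(2)]) (auto simp: B_def pix_lin assms)
  show ?thesis
  proof (rule InvI[OF affB qB])
    fix x :: nat assume x: "x<16"
    show "(\<Sum>k<16. cnot c t x k * v k) = (if x \<in> B then a * ipow (f (pix c t x)) else 0)"
      using G2[OF assms(2-4) x] h(3) pix_lt16[OF x assms(3)] x by (simp add: B_def)
  qed
qed

lemma xor_cancel3: "((x::nat) XOR y) XOR y = x" by (simp add: xor.assoc)

definition ee :: "nat \<Rightarrow> nat" where "ee q = 2^(3-q)"
definition xz :: "nat \<Rightarrow> nat \<Rightarrow> nat" where "xz q x = (if bitq q x = 0 then x else x XOR ee q)"

lemma ee_lt: "q<4 \<Longrightarrow> ee q < 16" unfolding ee_def by (rule e_lt16)
lemma bitq_ee: "p<4 \<Longrightarrow> q<4 \<Longrightarrow> bitq p (ee q) = (if p = q then 1 else 0)" unfolding ee_def by (rule bitq_e)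

lemma bitq_xz: "p<4 \<Longrightarrow> q<4 \<Longrightarrow> bitq p (xz q x) = (if p = q then 0 else bitq p x)"
  using bitq_01[of q x] bitq_le1[of p x] by (auto simp: xz_def bitq_xor bitq_ee)

lemma xz_lt: "x<16 \<Longrightarrow> q<4 \<Longrightarrow> xz q x < 16"
  by (simp add: xz_def xor_lt16 ee_lt)

lemma xz_lin: assumes "x<16" "y<16" "z<16" "q<4"
  shows "xz q (x XOR y XOR z) = xz q x XOR xz q y XOR xz q z"
proof (rule bits_eq)
  show "xz q (x XOR y XOR z) < 16" "xz q x XOR xz q y XOR xz q z < 16" using assms by (simp_all add: xz_lt xor_lt16)
  show "\<forall>p<4. bitq p (xz q (x XOR y XOR z)) = bitq p (xz q x XOR xz q y XOR xz q z)"
    using assms by (simp add: bitq_xz bitq_xor mod2_eq even_mod2)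
qed

lemma xz_cases: "xz q x = x \<or> xz q x = x XOR ee q" by (simp add: xz_def)

lemma bitq_xor_ee: "q<4 \<Longrightarrow> bitq q (x XOR ee q) = 1 - bitq q x"
  using bitq_01[of q x] by (auto simp: bitq_xor bitq_ee)

lemma sqrt2_c: "complex_of_real (sqrt 2) * complex_of_real (sqrt 2) = 2"
proof -
  have "complex_of_real (sqrt 2) * complex_of_real (sqrt 2) = complex_of_real (sqrt 2 * sqrt 2)"
    by (simp only: of_real_mult)
  also have "\<dots> = 2" by simp
  finally show ?thesis .
qed

lemma sqrt2_nz: "complex_of_real (sqrt 2) \<noteq> 0" by simp

lemma H_formula:
  assumes q: "q<4" and x: "x<16"
  shows "(\<Sum>k<16. on_qubit q hadamard x k * v k) =
     (v (xz q x) + (if bitq q x = 0 then 1 else -1) * v (xz q x XOR ee q)) / complex_of_real (sqrt 2)"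
proof -
  have g: "(\<Sum>k<16. on_qubit q hadamard x k * v k) = hadamard (bitq q x) (bitq q x) * v x + hadamard (bitq q x) (1 - bitq q x) * v (x XOR ee q)"
    unfolding ee_def by (rule G1[OF q x])
  show ?thesis
  proof (cases "bitq q x = 0")
    case True
    then show ?thesis unfolding g by (simp add: xz_def hadamard_def add_divide_distrib)
  next
    case False
    then have b: "bitq q x = 1" using bitq_01[of q x] by simp
    have "xz q x XOR ee q = x" using b by (simp add: xz_def xor_cancel3)
    then show ?thesis unfolding g using b by (simp add: xz_def hadamard_def add_divide_distrib diff_divide_distrib)
  qed
qed

lemma flipA: "aff A \<Longrightarrow> y \<in> A \<Longrightarrow> y XOR e \<in> A \<Longrightarrow> x \<in> A \<Longrightarrow> x XOR e \<in> A"
  using aff_xor[of A x y "y XOR e"] by (simp add: xor_cancel xor.assoc)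

lemma ipow_sign: "(if bitq q x = 0 then 1 else -1) = ipow (2 * int (bitq q x))"
  using bitq_01[of q x] by auto

lemma arithA:
  fixes dx dy dz dw ux uy uz uw :: int
  assumes "(dy - dx) mod 4 = (dw - dz) mod 4" "(2*ux + dx) mod 4 = 0" "(2*uy + dy) mod 4 = 0" "(2*uz + dz) mod 4 = 0"
    "uw = (ux + uy + uz) mod 2" "ux = 0 \<or> ux = 1" "uy = 0 \<or> uy = 1" "uz = 0 \<or> uz = 1"
  shows "(2*uw + dw) mod 4 = 0"
proof -
  have "even (uw + ux + uy + uz)" using assms(5-8) by auto
  then obtain k where k: "uw + ux + uy + uz = 2*k" by (metis evenE)
  have "4 dvd (dy - dx) - (dw - dz)" using assms(1) by (simp add: mod_eq_dvd_iff)
  then obtain a where a: "(dy - dx) - (dw - dz) = 4*a" by (auto elim: dvdE)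
  obtain b1 b2 b3 where "2*ux + dx = 4*b1" "2*uy + dy = 4*b2" "2*uz + dz = 4*b3" using assms(2-4) by (metis dvd_def mod_0_imp_dvd)
  then have "2*uw + dw = 4*(- a + b2 - b1 + b3 + k - uy - uz)" using a k by (simp add: algebra_simps)
  then show ?thesis by simp
qed

lemma arithB:
  fixes dx dy dz dw ux uy uz uw :: int
  assumes "(dy - dx) mod 4 = (dw - dz) mod 4"
    "uw = (ux + uy + uz) mod 2" "ux = 0 \<or> ux = 1" "uy = 0 \<or> uy = 1" "uz = 0 \<or> uz = 1"
    "odd dx" "odd dy" "odd dz"
  shows "((2*uw+dw) mod 4) div 2 = (((2*ux+dx) mod 4) div 2 + ((2*uy+dy) mod 4) div 2 + ((2*uz+dz) mod 4) div 2) mod 2"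
proof -
  have "even (uw + ux + uy + uz)" using assms(2-5) by auto
  then obtain k where k: "uw + ux + uy + uz = 2*k" by (metis evenE)
  have "4 dvd (dy - dx) - (dw - dz)" using assms(1) by (simp add: mod_eq_dvd_iff)
  then obtain a where a: "(dy - dx) - (dw - dz) = 4*a" by (auto elim: dvdE)
  define Tx where "Tx = 2*ux+dx"
  define Ty where "Ty = 2*uy+dy"
  define Tz where "Tz = 2*uz+dz"
  define Tw where "Tw = 2*uw+dw"
  have T4: "Tw - Ty - Tz + Tx = 4*(k - uy - uz - a)" using a k unfolding Tx_def Ty_def Tz_def Tw_def by (simp add: algebra_simps)
  have ox: "odd Tx" "odd Ty" "odd Tz" using assms(6-8) unfolding Tx_def Ty_def Tz_def by auto
  have ow: "odd Tw" using T4 ox by presburger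
  have rx: "Tx mod 4 = 1 + 2 * ((Tx mod 4) div 2)" using ox(1) by presburger
  have ry: "Ty mod 4 = 1 + 2 * ((Ty mod 4) div 2)" using ox(2) by presburger
  have rz: "Tz mod 4 = 1 + 2 * ((Tz mod 4) div 2)" using ox(3) by presburger
  have rw: "Tw mod 4 = 1 + 2 * ((Tw mod 4) div 2)" using ow by presburger
  define tx where "tx = (Tx mod 4) div 2"
  define ty where "ty = (Ty mod 4) div 2"
  define tz where "tz = (Tz mod 4) div 2"
  define tw where "tw = (Tw mod 4) div 2"
  have ex: "Tx = 4*(Tx div 4) + 1 + 2*tx" using rx tx_def by (metis add.assoc div_mult_mod_eq mult.commute)
  have ey: "Ty = 4*(Ty div 4) + 1 + 2*ty" using ry ty_def by (metis add.assoc div_mult_mod_eq mult.commute)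
  have ez: "Tz = 4*(Tz div 4) + 1 + 2*tz" using rz tz_def by (metis add.assoc div_mult_mod_eq mult.commute)
  have ew: "Tw = 4*(Tw div 4) + 1 + 2*tw" using rw tw_def by (metis add.assoc div_mult_mod_eq mult.commute)
  have "2*(tw - ty - tz + tx) = 4*(k - uy - uz - a - Tw div 4 + Ty div 4 + Tz div 4 - Tx div 4)"
    using T4 ex ey ez ew by (simp add: algebra_simps)
  then have "tw - ty - tz + tx = 2*(k - uy - uz - a - Tw div 4 + Ty div 4 + Tz div 4 - Tx div 4)" by simp
  then have "even (tw - ty - tz + tx)" by simp
  moreover have "(Tx mod 4) div 2 \<in> {0,1}" "(Ty mod 4) div 2 \<in> {0,1}" "(Tz mod 4) div 2 \<in> {0,1}" "(Tw mod 4) div 2 \<in> {0,1}"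
    by auto
  ultimately have "(Tw mod 4) div 2 = ((Tx mod 4) div 2 + (Ty mod 4) div 2 + (Tz mod 4) div 2) mod 2"
    unfolding tx_def[symmetric] ty_def[symmetric] tz_def[symmetric] tw_def[symmetric] by auto
  then show ?thesis unfolding Tx_def Ty_def Tz_def Tw_def .
qed

lemma Inv_H_dir:
  assumes affA: "aff A" and qf: "quadph A f" and v: "\<forall>x<16. v x = (if x \<in> A then c * ipow (f x) else 0)"
   and q: "q<4" and y0: "y0 \<in> A" "y0 XOR ee q \<in> A"
  shows "Inv (\<lambda>x. \<Sum>k<16. on_qubit q hadamard x k * v k)"
proof -
  have flip: "x XOR ee q \<in> A" if "x \<in> A" for x using flipA[OF affA y0 that] .
  have flip2: "x \<in> A" if "x XOR ee q \<in> A" for x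
  proof -
    have "(x XOR ee q) XOR ee q \<in> A" by (rule flip[OF that])
    then show ?thesis by (simp only: xor_cancel3)
  qed
  have memA: "xz q x \<in> A \<longleftrightarrow> x \<in> A" for x
  proof (cases "xz q x = x")
    case False
    then have "xz q x = x XOR ee q" using xz_cases by metis
    then show ?thesis using flip[of x] flip2[of x] by (simp only:) blast
  qed simp
  have memA2: "xz q x XOR ee q \<in> A \<longleftrightarrow> x \<in> A" for x
  proof (cases "xz q x = x")
    case False
    then have "xz q x = x XOR ee q" using xz_cases by metis
    then show ?thesis by (simp only: xor_cancel3)
  next
    case True
    then show ?thesis using flip[of x] flip2[of x] by (simp only:) blast
  qed
  have ltA: "x \<in> A \<Longrightarrow> x < 16" for x using aff_lt[OF affA] .
  define d where "d x = f (xz q x XOR ee q) - f (xz q x)" for x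
  define T where "T x = 2 * int (bitq q x) + d x" for x
  have val: "(\<Sum>k<16. on_qubit q hadamard x k * v k) = c / complex_of_real (sqrt 2) * ipow (f (xz q x)) * (1 + ipow (T x))"
    if x: "x \<in> A" for x
  proof -
    have x16: "x < 16" using ltA x .
    have v1: "v (xz q x) = c * ipow (f (xz q x))" using v memA x xz_lt[OF x16 q] by simp
    have v2: "v (xz q x XOR ee q) = c * ipow (f (xz q x)) * ipow (d x)"
      using v memA2 x xor_lt16[OF xz_lt[OF x16 q] ee_lt[OF q]] by (simp add: d_def ipow_add[symmetric])
    show ?thesis unfolding H_formula[OF q x16] v1 v2 ipow_sign T_def ipow_add
      by (simp add: field_simps)
  qed
  have val0: "(\<Sum>k<16. on_qubit q hadamard x k * v k) = 0" if x: "x < 16" "x \<notin> A" for x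
  proof -
    have "v (xz q x) = 0" "v (xz q x XOR ee q) = 0"
      using v memA memA2 x xz_lt[OF x(1) q] xor_lt16[OF xz_lt[OF x(1) q] ee_lt[OF q]] by auto
    then show ?thesis unfolding H_formula[OF q x(1)] by simp
  qed
  have DDd: "DD f (xz q x) (xz q x XOR ee q) (xz q y) = d y - d x" for x y
  proof -
    have "xz q x XOR (xz q x XOR ee q) XOR xz q y = xz q y XOR ee q"
      by (rule bit_eqI) (auto simp: bit_xor_iff)
    then show ?thesis by (simp add: DD_def d_def)
  qed
  have par: "even (d y - d x)" if "x \<in> A" "y \<in> A" for x y
    using quadph_even[OF qf, of "xz q x" "xz q x XOR ee q" "xz q y"] that memA memA2 DDd by simp
  have cons: "(d y - d x) mod 4 = (d (x XOR y XOR z) - d z) mod 4" if h: "x \<in> A" "y \<in> A" "z \<in> A" for x y z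
  proof -
    have w: "x XOR y XOR z \<in> A" using aff_xor[OF affA h] .
    have lin: "xz q (x XOR y XOR z) = xz q x XOR xz q y XOR xz q z" using xz_lin ltA h q by blast
    have e1: "xz q x XOR (xz q x XOR ee q) = xz q z XOR (xz q z XOR ee q)" by (simp only: xor_cancel(2))
    have e2: "xz q x XOR xz q y = xz q z XOR xz q (x XOR y XOR z)"
      unfolding lin by (rule bit_eqI) (auto simp: bit_xor_iff)
    have "DD f (xz q x) (xz q x XOR ee q) (xz q y) mod 4 = DD f (xz q z) (xz q z XOR ee q) (xz q (x XOR y XOR z)) mod 4"
      by (rule quadph_mod[OF qf]) (use h w memA memA2 e1 e2 in auto)
    then show ?thesis unfolding DDd .
  qed
  have bw: "int (bitq q (x XOR y XOR z)) = (int (bitq q x) + int (bitq q y) + int (bitq q z)) mod 2" for x y z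
    using abit_xor[OF abit_bitq[of UNIV q]] by simp
  have b01: "int (bitq q x) = 0 \<or> int (bitq q x) = 1" for x using bitq_01[of q x] by auto
  show ?thesis
  proof (cases "even (d y0)")
    case True
    then have ev: "even (d x)" if "x \<in> A" for x using par[OF that y0(1)] by presburger
    define B where "B = {x \<in> A. T x mod 4 = 0}"
    have affB: "aff B"
    proof (rule affI)
      show "B \<subseteq> {..<16}" using ltA B_def by auto
      fix x y z assume h: "x \<in> B" "y \<in> B" "z \<in> B"
      then have hA: "x\<in>A" "y\<in>A" "z\<in>A" unfolding B_def by auto
      have c1: "(d y - d x) mod 4 = (d (x XOR y XOR z) - d z) mod 4" by (rule cons[OF hA])
      have t: "T x mod 4 = 0" "T y mod 4 = 0" "T z mod 4 = 0" using h B_def by auto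
      have "T (x XOR y XOR z) mod 4 = 0"
        using arithA[OF c1 t[unfolded T_def] bw[of x y z] b01[of x] b01[of y] b01[of z]] unfolding T_def .
      then show "x XOR y XOR z \<in> B" using aff_xor[OF affA hA] B_def by auto
    qed
    have qB: "quadph B (\<lambda>x. f (xz q x))"
      by (rule Q_comp[OF qf]) (use B_def memA xz_lin ltA q in auto)
    show ?thesis
    proof (rule InvI[OF affB qB])
      fix x :: nat assume x16: "x < 16"
      show "(\<Sum>k<16. on_qubit q hadamard x k * v k) = (if x \<in> B then c * complex_of_real (sqrt 2) * ipow (f (xz q x)) else 0)"
      proof (cases "x \<in> A")
        case True
        have "even (T x)" using ev[OF True] by (simp add: T_def)
        then have "T x mod 4 = 0 \<or> T x mod 4 = 2" by presburger
        then show ?thesis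
        proof
          assume t0: "T x mod 4 = 0"
          then have "ipow (T x) = 1" by (metis ipow_mod ipow_0)
          moreover have "x \<in> B" using True t0 B_def by auto
          ultimately show ?thesis unfolding val[OF True] using sqrt2_c
            by (simp add: field_simps)
        next
          assume t2: "T x mod 4 = 2"
          then have "ipow (T x) = -1" by (metis ipow_mod ipow_2)
          moreover have "x \<notin> B" using t2 B_def by auto
          ultimately show ?thesis unfolding val[OF True] by simp
        qed
      next
        case False
        then show ?thesis using val0[OF x16 False] B_def by auto
      qed
    qed
  next
    case False
    then have od: "odd (d x)" if "x \<in> A" for x using par[OF that y0(1)] by presburger
    define t where "t x = (T x mod 4) div 2" for x
    have abt: "abit A t"
    proof (rule abitI)
      fix x assume "x \<in> A"
      show "t x = 0 \<or> t x = 1" unfolding t_def by presburger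
    next
      fix x y z assume hA: "x\<in>A" "y\<in>A" "z\<in>A"
      have c1: "(d y - d x) mod 4 = (d (x XOR y XOR z) - d z) mod 4" by (rule cons[OF hA])
      have o: "odd (d x)" "odd (d y)" "odd (d z)" using od hA by auto
      show "t (x XOR y XOR z) = (t x + t y + t z) mod 2"
        using arithB[OF c1 bw[of x y z] b01[of x] b01[of y] b01[of z] o] unfolding t_def T_def .
    qed
    have qA: "quadph A (\<lambda>x. f (xz q x) + 3 * t x)"
      by (rule Q_add[OF Q_comp[OF qf] Q_smult[OF Q_abit[OF abt]]]) (use memA xz_lin ltA q in auto)
    show ?thesis
    proof (rule InvI[OF affA qA])
      fix x :: nat assume x16: "x < 16"
      show "(\<Sum>k<16. on_qubit q hadamard x k * v k) = (if x \<in> A then c * (1 + \<i>) / complex_of_real (sqrt 2) * ipow (f (xz q x) + 3 * t x) else 0)"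
      proof (cases "x \<in> A")
        case True
        have "odd (T x)" using od[OF True] by (simp add: T_def)
        then have "T x mod 4 = 1 \<or> T x mod 4 = 3" by presburger
        then show ?thesis
        proof
          assume t1: "T x mod 4 = 1"
          then have "ipow (T x) = \<i>" by (metis ipow_mod ipow_1)
          moreover have "t x = 0" using t1 t_def by simp
          ultimately show ?thesis unfolding val[OF True] using True by (simp add: field_simps)
        next
          assume t3: "T x mod 4 = 3"
          then have "ipow (T x) = -\<i>" by (metis ipow_mod ipow_3)
          moreover have "t x = 1" using t3 t_def by simp
          ultimately show ?thesis unfolding val[OF True] using True by (simp add: field_simps ipow_add)
        qed
      next
        case False
        then show ?thesis using val0[OF x16 False] by auto
      qed
    qed
  qed
qed

lemma xor3_0e: "a \<in> {0, e} \<Longrightarrow> b \<in> {0, e} \<Longrightarrow> c \<in> {0, e} \<Longrightarrow> a XOR b XOR c \<in> {0, (e::nat)}"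
  by (auto simp: xor_cancel)

lemma xor_shuffle: "((x::nat) XOR a) XOR (y XOR b) XOR (z XOR c) = (x XOR y XOR z) XOR (a XOR b XOR c)"
  by (rule bit_eqI) (auto simp: bit_xor_iff)

lemma Inv_H_nodir:
  assumes affA: "aff A" and qf: "quadph A f" and v: "\<forall>x<16. v x = (if x \<in> A then c * ipow (f x) else 0)"
   and q: "q<4" and nodir: "\<forall>y\<in>A. y XOR ee q \<notin> A"
  shows "Inv (\<lambda>x. \<Sum>k<16. on_qubit q hadamard x k * v k)"
proof -
  define B where "B = {x. x < 16 \<and> (x \<in> A \<or> x XOR ee q \<in> A)}"
  define s where "s x = (if x \<in> A then x else x XOR ee q)" for x
  define k where "k x = (if x \<in> A then 0 else ee q)" for x
  have sk: "s x = x XOR k x" for x by (simp add: s_def k_def)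
  have k0e: "k x \<in> {0, ee q}" for x by (simp add: k_def)
  have sA: "s x \<in> A" if "x \<in> B" for x using that by (auto simp: B_def s_def)
  have ltA: "x \<in> A \<Longrightarrow> x < 16" for x using aff_lt[OF affA] .
  have key: "s x XOR s y XOR s z = (x XOR y XOR z) XOR (k x XOR k y XOR k z)" for x y z
    unfolding sk by (rule xor_shuffle)
  have affB: "aff B"
  proof (rule affI)
    show "B \<subseteq> {..<16}" by (auto simp: B_def)
    fix x y z assume h: "x \<in> B" "y \<in> B" "z \<in> B"
    have S: "s x XOR s y XOR s z \<in> A" using aff_xor[OF affA sA[OF h(1)] sA[OF h(2)] sA[OF h(3)]] .
    have "k x XOR k y XOR k z \<in> {0, ee q}" using xor3_0e k0e by blast
    then have "x XOR y XOR z \<in> A \<or> (x XOR y XOR z) XOR ee q \<in> A" using S key[of x y z] by auto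
    moreover have "x XOR y XOR z < 16" using h by (simp add: B_def xor_lt16)
    ultimately show "x XOR y XOR z \<in> B" by (auto simp: B_def)
  qed
  have slin: "s (x XOR y XOR z) = s x XOR s y XOR s z" if h: "x \<in> B" "y \<in> B" "z \<in> B" for x y z
  proof -
    define w where "w = x XOR y XOR z"
    have S: "s x XOR s y XOR s z \<in> A" using aff_xor[OF affA sA[OF h(1)] sA[OF h(2)] sA[OF h(3)]] .
    have kk: "k x XOR k y XOR k z \<in> {0, ee q}" using xor3_0e k0e by blast
    show ?thesis
    proof (cases "w \<in> A")
      case True
      have "k x XOR k y XOR k z = 0"
      proof (rule ccontr)
        assume "k x XOR k y XOR k z \<noteq> 0"
        then have "k x XOR k y XOR k z = ee q" using kk by auto
        then have "w XOR ee q \<in> A" using S key[of x y z] w_def by simp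
        then show False using nodir True by blast
      qed
      then show ?thesis using key[of x y z] True w_def s_def by simp
    next
      case False
      have "k x XOR k y XOR k z = ee q"
      proof (rule ccontr)
        assume "k x XOR k y XOR k z \<noteq> ee q"
        then have "k x XOR k y XOR k z = 0" using kk by auto
        then have "w \<in> A" using S key[of x y z] w_def by simp
        then show False using False by blast
      qed
      then show ?thesis using key[of x y z] False w_def s_def by simp
    qed
  qed
  have qB: "quadph B (\<lambda>x. f (s x) + 2 * int (bitq q x) * int (bitq q (s x)))"
    by (rule Q_add[OF Q_comp[OF qf sA slin] Q_2prod[OF abit_bitq abit_comp[OF abit_bitq sA slin]]])
  show ?thesis
  proof (rule InvI[OF affB qB])
    fix x :: nat assume x16: "x < 16"
    have xe16: "x XOR ee q < 16" using x16 ee_lt[OF q] xor_lt16 by blast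
    have bxe: "bitq q (x XOR ee q) = 1 - bitq q x" by (rule bitq_xor_ee[OF q])
    have hf: "(\<Sum>k<16. on_qubit q hadamard x k * v k) =
     (v (xz q x) + (if bitq q x = 0 then 1 else -1) * v (xz q x XOR ee q)) / complex_of_real (sqrt 2)"
      by (rule H_formula[OF q x16])
    show "(\<Sum>k<16. on_qubit q hadamard x k * v k) = (if x \<in> B then c / complex_of_real (sqrt 2) * ipow (f (s x) + 2 * int (bitq q x) * int (bitq q (s x))) else 0)"
    proof (cases "bitq q x = 0")
      case b0: True
      then have xzx: "xz q x = x" by (simp add: xz_def)
      show ?thesis
      proof (cases "x \<in> A")
        case True
        then have "x XOR ee q \<notin> A" using nodir by blast
        then show ?thesis unfolding hf xzx using True b0 v x16 xe16 by (simp add: B_def s_def)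
      next
        case False
        then show ?thesis unfolding hf xzx using False b0 v x16 xe16 bxe by (simp add: B_def s_def)
      qed
    next
      case b1: False
      then have b1': "bitq q x = 1" using bitq_01[of q x] by simp
      then have xzx: "xz q x = x XOR ee q" "xz q x XOR ee q = x" by (simp_all add: xz_def xor_cancel3)
      show ?thesis
      proof (cases "x \<in> A")
        case True
        then have "x XOR ee q \<notin> A" using nodir by blast
        then show ?thesis unfolding hf xzx using True b1' v x16 xe16 by (simp add: B_def s_def ipow_add xor_cancel3)
      next
        case False
        then show ?thesis unfolding hf xzx using False b1' v x16 xe16 bxe by (simp add: B_def s_def xor_cancel3)
      qed
    qed
  qed
qed

lemma Inv_H:
  assumes "Inv v" "q<4" shows "Inv (\<lambda>x. \<Sum>k<16. on_qubit q hadamard x k * v k)"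
proof -
  obtain A f c where h: "aff A" "quadph A f" "\<forall>x<16. v x = (if x \<in> A then c * ipow (f x) else 0)"
    using assms(1) Inv_def by auto
  show ?thesis
  proof (cases "\<exists>y\<in>A. y XOR ee q \<in> A")
    case True
    then obtain y0 where "y0 \<in> A" "y0 XOR ee q \<in> A" by blast
    then show ?thesis using Inv_H_dir[OF h assms(2)] by blast
  next
    case False
    then show ?thesis using Inv_H_nodir[OF h assms(2)] by blast
  qed
qed

lemma Inv_id: "Inv (\<lambda>x. id4 x 0)"
proof (rule InvI[of "{0}" "\<lambda>x. 0" _ 1])
  show "aff {0}" by (rule affI) auto
  show "quadph {0} (\<lambda>x. 0)" by (rule quadphI) (auto simp: DD_def)
qed (simp add: id4_def)

lemma Inv_clifford: "C \<in> clifford4 \<Longrightarrow> Inv (\<lambda>x. C x 0)"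
proof (induction rule: clifford4.induct)
  case clifford_id
  then show ?case by (rule Inv_id)
next
  case (clifford_H C q)
  then show ?case using Inv_H[OF clifford_H.IH clifford_H.hyps(2)] by (simp add: mmult_def)
next
  case (clifford_S C q)
  then show ?case using Inv_S[OF clifford_S.IH clifford_S.hyps(2)] by (simp add: mmult_def)
next
  case (clifford_CNOT C c t)
  then show ?case using Inv_CX[OF clifford_CNOT.IH clifford_CNOT.hyps(2-4)] by (simp add: mmult_def)
qed

lemma Inv_struct:
  assumes "Inv v"
  shows "\<exists>m. (\<forall>x<16. v x = 0 \<or> cmod (v x) = m) \<and>
     (\<forall>x<16. \<forall>y<16. \<forall>z<16. v x \<noteq> 0 \<longrightarrow> v y \<noteq> 0 \<longrightarrow> v z \<noteq> 0 \<longrightarrow> v (x XOR y XOR z) \<noteq> 0)"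
proof -
  obtain A f c where h: "aff A" "quadph A f" "\<forall>x<16. v x = (if x \<in> A then c * ipow (f x) else 0)"
    using assms Inv_def by auto
  have nz: "v x \<noteq> 0 \<longleftrightarrow> x \<in> A \<and> c \<noteq> 0" if "x<16" for x using h(3) that by (auto simp: ipow_def)
  show ?thesis
  proof (intro exI conjI allI impI)
    fix x :: nat assume "x<16" then show "v x = 0 \<or> cmod (v x) = cmod c" using h(3) by (simp add: norm_mult)
  next
    fix x y z :: nat assume "x<16" "y<16" "z<16" "v x \<noteq> 0" "v y \<noteq> 0" "v z \<noteq> 0"
    then have "x \<in> A" "y\<in>A" "z\<in>A" "c \<noteq> 0" using nz by auto
    moreover have "x XOR y XOR z < 16" using \<open>x<16\<close> \<open>y<16\<close> \<open>z<16\<close> by (simp add: xor_lt16)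
    ultimately show "v (x XOR y XOR z) \<noteq> 0" using nz[of "x XOR y XOR z"] aff_xor[OF h(1), of x y z] by blast
  qed
qed

lemma sq2: "(cmod (a + b))^2 \<le> 2 * ((cmod a)^2 + (cmod b)^2)"
proof -
  have "cmod (a+b) \<le> cmod a + cmod b" by (rule norm_triangle_ineq)
  then have "(cmod (a+b))^2 \<le> (cmod a + cmod b)^2" by (simp add: power_mono)
  also have "\<dots> \<le> 2 * ((cmod a)^2 + (cmod b)^2)"
  proof -
    have "2 * ((cmod a)^2 + (cmod b)^2) - (cmod a + cmod b)^2 = (cmod a - cmod b)^2" by (simp add: power2_eq_square algebra_simps)
    moreover have "0 \<le> (cmod a - cmod b)^2" by simp
    ultimately show ?thesis by linarith
  qed
  finally show ?thesis .
qed

lemma sq3: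
  assumes "cmod a \<le> m" "cmod b \<le> m" "cmod c \<le> m"
  shows "(cmod (a + b + c))^2 \<le> 9 * m^2"
proof -
  have "cmod (a+b+c) \<le> cmod a + cmod b + cmod c" by (rule order_trans[OF norm_triangle_ineq add_right_mono[OF norm_triangle_ineq]])
  also have "\<dots> \<le> 3 * m" using assms by simp
  finally have "cmod (a+b+c) \<le> 3*m" .
  then have "(cmod (a+b+c))^2 \<le> (3*m)^2" by (rule power_mono) simp
  then show ?thesis by (simp add: power_mult_distrib)
qed

lemma sq4:
  assumes "cmod a \<le> m" "cmod b \<le> m" "cmod c \<le> m" "cmod d \<le> m"
  shows "(cmod (a + b + c + d))^2 \<le> 16 * m^2"
proof -
  have "cmod (a+b+c+d) \<le> cmod (a+b+c) + cmod d" by (rule norm_triangle_ineq)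
  also have "\<dots> \<le> cmod a + cmod b + cmod c + cmod d" by (rule add_right_mono, rule order_trans[OF norm_triangle_ineq add_right_mono[OF norm_triangle_ineq]])
  finally have "cmod (a+b+c+d) \<le> cmod a + cmod b + cmod c + cmod d" .
  also have "\<dots> \<le> 4 * m" using assms by simp
  finally have "cmod (a+b+c+d) \<le> 4*m" .
  then have "(cmod (a+b+c+d))^2 \<le> (4*m)^2" by (rule power_mono) simp
  then show ?thesis by (simp add: power_mult_distrib)
qed

lemma core_ineq:
  assumes "Inv v"
  shows "(cmod (v 3 + v 5 + v 6))^2 \<le> 3 * (cmod (v 0))^2 + 2 * ((cmod (v 3))^2 + (cmod (v 5))^2 + (cmod (v 6))^2)"
proof -
  obtain m where m: "\<forall>x<16. v x = 0 \<or> cmod (v x) = m"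
    and cl: "\<forall>x<16. \<forall>y<16. \<forall>z<16. v x \<noteq> 0 \<longrightarrow> v y \<noteq> 0 \<longrightarrow> v z \<noteq> 0 \<longrightarrow> v (x XOR y XOR z) \<noteq> 0"
    using Inv_struct[OF assms] by blast
  show ?thesis
  proof (cases "v 3 \<noteq> 0 \<and> v 5 \<noteq> 0 \<and> v 6 \<noteq> 0")
    case True
    have x: "(3::nat) XOR 5 XOR 6 = 0" by (simp add: numeral_3_eq_3[symmetric])
    then have "v 0 \<noteq> 0" using cl[rule_format, of 3 5 6] True by (simp only: x) simp
    then have e: "cmod (v 0) = m" "cmod (v 3) = m" "cmod (v 5) = m" "cmod (v 6) = m" using m[rule_format, of 0] m[rule_format, of 3] m[rule_format, of 5] m[rule_format, of 6] True by auto
    have "(cmod (v 3 + v 5 + v 6))^2 \<le> 9 * m^2" by (rule sq3) (use e in auto)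
    then show ?thesis using e by simp
  next
    case False
    then have "v 3 = 0 \<or> v 5 = 0 \<or> v 6 = 0" by blast
    then show ?thesis
    proof (elim disjE)
      assume h: "v 3 = 0"
      have "(cmod (v 3 + v 5 + v 6))^2 \<le> 2*((cmod (v 5))^2 + (cmod (v 6))^2)" using sq2[of "v 5" "v 6"] h by (simp add: add.commute add.left_commute)
      moreover have "(cmod (v 3))^2 = 0" using h by simp
      ultimately show ?thesis using zero_le_power2[of "cmod (v 0)"] by (smt (verit))
    next
      assume h: "v 5 = 0"
      have "(cmod (v 3 + v 5 + v 6))^2 \<le> 2*((cmod (v 3))^2 + (cmod (v 6))^2)" using sq2[of "v 3" "v 6"] h by (simp add: add.commute add.left_commute)
      moreover have "(cmod (v 5))^2 = 0" using h by simp
      ultimately show ?thesis using zero_le_power2[of "cmod (v 0)"] by (smt (verit))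
    next
      assume h: "v 6 = 0"
      have "(cmod (v 3 + v 5 + v 6))^2 \<le> 2*((cmod (v 3))^2 + (cmod (v 5))^2)" using sq2[of "v 3" "v 5"] h by (simp add: add.commute add.left_commute)
      moreover have "(cmod (v 6))^2 = 0" using h by simp
      ultimately show ?thesis using zero_le_power2[of "cmod (v 0)"] by (smt (verit))
    qed
  qed
qed


lemma four_two:
  fixes a b c d :: complex
  assumes "\<not>(a\<noteq>0 \<and> b\<noteq>0 \<and> c\<noteq>0)" "\<not>(a\<noteq>0 \<and> b\<noteq>0 \<and> d\<noteq>0)" "\<not>(a\<noteq>0 \<and> c\<noteq>0 \<and> d\<noteq>0)" "\<not>(b\<noteq>0 \<and> c\<noteq>0 \<and> d\<noteq>0)"
  shows "(cmod (a+b+c+d))^2 \<le> 2*((cmod a)^2 + (cmod b)^2 + (cmod c)^2 + (cmod d)^2)"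
  using assms sq2[of a b] sq2[of a c] sq2[of a d] sq2[of b c] sq2[of b d] sq2[of c d]
  by (cases "a = 0"; cases "b = 0"; cases "c = 0"; cases "d = 0"; simp add: add.commute add.left_commute; smt (verit) zero_le_power2)

lemma core_ineq0:
  assumes "Inv v"
  shows "(cmod (v 7 + v 11 + v 13 + v 14))^2 \<le> 2 * ((cmod (v 7))^2 + (cmod (v 11))^2 + (cmod (v 13))^2 + (cmod (v 14))^2)
      + 16 * ((cmod (v 1))^2 + (cmod (v 2))^2 + (cmod (v 4))^2 + (cmod (v 8))^2)"
proof -
  obtain m where m: "\<forall>x<16. v x = 0 \<or> cmod (v x) = m"
    and cl: "\<forall>x<16. \<forall>y<16. \<forall>z<16. v x \<noteq> 0 \<longrightarrow> v y \<noteq> 0 \<longrightarrow> v z \<noteq> 0 \<longrightarrow> v (x XOR y XOR z) \<noteq> 0"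
    using Inv_struct[OF assms] by blast
  have le: "cmod (v x) \<le> \<bar>m\<bar>" if "x < 16" for x
  proof -
    have "v x = 0 \<or> cmod (v x) = m" using m that by blast
    then show ?thesis by auto
  qed
  have bound: "(cmod (v 7 + v 11 + v 13 + v 14))^2 \<le> 16 * \<bar>m\<bar>^2" by (rule sq4) (use le in auto)
  have pos: "0 \<le> (cmod (v x))^2" for x by simp
  have x1: "(7::nat) XOR 11 XOR 13 = 1" "(7::nat) XOR 11 XOR 14 = 2" "(7::nat) XOR 13 XOR 14 = 4" "(11::nat) XOR 13 XOR 14 = 8"
    by (simp_all add: numeral_3_eq_3[symmetric])
  have hit: "cmod (v p) = m" if "p < 16" "v p \<noteq> 0" for p using m that by blast
  show ?thesis
  proof (cases "(v 7 \<noteq> 0 \<and> v 11 \<noteq> 0 \<and> v 13 \<noteq> 0) \<or> (v 7 \<noteq> 0 \<and> v 11 \<noteq> 0 \<and> v 14 \<noteq> 0) \<or> (v 7 \<noteq> 0 \<and> v 13 \<noteq> 0 \<and> v 14 \<noteq> 0) \<or> (v 11 \<noteq> 0 \<and> v 13 \<noteq> 0 \<and> v 14 \<noteq> 0)")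
    case True
    then have "\<exists>p\<in>{1,2,4,8}. v p \<noteq> 0"
      using cl[rule_format, of 7 11 13] cl[rule_format, of 7 11 14] cl[rule_format, of 7 13 14] cl[rule_format, of 11 13 14]
      unfolding x1 by auto
    then obtain p where p: "p \<in> {1,2,4,8}" "v p \<noteq> 0" by blast
    then have "(cmod (v p))^2 = m^2" using hit[of p] by auto
    then have "16 * \<bar>m\<bar>^2 \<le> 16 * ((cmod (v 1))^2 + (cmod (v 2))^2 + (cmod (v 4))^2 + (cmod (v 8))^2)"
      using p(1) pos[of 1] pos[of 2] pos[of 4] pos[of 8] by auto
    then show ?thesis using bound pos[of 7] pos[of 11] pos[of 13] pos[of 14] by (smt (verit))
  next
    case False
    have "(cmod (v 7 + v 11 + v 13 + v 14))^2 \<le> 2 * ((cmod (v 7))^2 + (cmod (v 11))^2 + (cmod (v 13))^2 + (cmod (v 14))^2)"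
      by (rule four_two) (use False in auto)
    then show ?thesis using pos[of 1] pos[of 2] pos[of 4] pos[of 8] by (smt (verit))
  qed
qed

definition uu :: "real \<Rightarrow> nat \<Rightarrow> nat \<Rightarrow> complex" where
  "uu g k a = (\<Sum>i<16. kraus_ad4 g k a i * dicke43 i)"

lemma sum_prod_cnj: "(\<Sum>i\<in>I. \<Sum>j\<in>J. X i * cnj (Y j)) = (\<Sum>i\<in>I. X i) * cnj (\<Sum>j\<in>J. Y j)"
  by (simp add: sum_product cnj_sum)

lemma rho_uu: "rho43 g a b = (\<Sum>k<16. uu g k a * cnj (uu g k b))"
proof -
  have "rho43 g a b = (\<Sum>k<16. \<Sum>i<16. \<Sum>j<16. (kraus_ad4 g k a i * dicke43 i) * cnj (kraus_ad4 g k b j * dicke43 j))"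
    unfolding rho43_def amp_damp4_def by (simp add: mult_ac)
  also have "\<dots> = (\<Sum>k<16. uu g k a * cnj (uu g k b))"
    unfolding uu_def by (simp only: sum_prod_cnj)
  finally show ?thesis .
qed

definition Mo :: "complex \<Rightarrow> complex \<Rightarrow> nat \<Rightarrow> nat \<Rightarrow> complex" where
  "Mo S T m n = S^m * T^n / 2"

definition Utab :: "complex \<Rightarrow> complex \<Rightarrow> nat \<Rightarrow> nat \<Rightarrow> complex" where
  "Utab S T k a = (
    if k = 0 \<and> a = 7 then Mo S T 0 3 else
    if k = 0 \<and> a = 11 then Mo S T 0 3 else
    if k = 0 \<and> a = 13 then Mo S T 0 3 else
    if k = 0 \<and> a = 14 then Mo S T 0 3 else
    if k = 1 \<and> a = 6 then Mo S T 1 2 else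
    if k = 1 \<and> a = 10 then Mo S T 1 2 else
    if k = 1 \<and> a = 12 then Mo S T 1 2 else
    if k = 2 \<and> a = 5 then Mo S T 1 2 else
    if k = 2 \<and> a = 9 then Mo S T 1 2 else
    if k = 2 \<and> a = 12 then Mo S T 1 2 else
    if k = 3 \<and> a = 4 then Mo S T 2 1 else
    if k = 3 \<and> a = 8 then Mo S T 2 1 else
    if k = 4 \<and> a = 3 then Mo S T 1 2 else
    if k = 4 \<and> a = 9 then Mo S T 1 2 else
    if k = 4 \<and> a = 10 then Mo S T 1 2 else
    if k = 5 \<and> a = 2 then Mo S T 2 1 else
    if k = 5 \<and> a = 8 then Mo S T 2 1 else
    if k = 6 \<and> a = 1 then Mo S T 2 1 else
    if k = 6 \<and> a = 8 then Mo S T 2 1 else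
    if k = 7 \<and> a = 0 then Mo S T 3 0 else
    if k = 8 \<and> a = 3 then Mo S T 1 2 else
    if k = 8 \<and> a = 5 then Mo S T 1 2 else
    if k = 8 \<and> a = 6 then Mo S T 1 2 else
    if k = 9 \<and> a = 2 then Mo S T 2 1 else
    if k = 9 \<and> a = 4 then Mo S T 2 1 else
    if k = 10 \<and> a = 1 then Mo S T 2 1 else
    if k = 10 \<and> a = 4 then Mo S T 2 1 else
    if k = 11 \<and> a = 0 then Mo S T 3 0 else
    if k = 12 \<and> a = 1 then Mo S T 2 1 else
    if k = 12 \<and> a = 2 then Mo S T 2 1 else
    if k = 13 \<and> a = 0 then Mo S T 3 0 else
    if k = 14 \<and> a = 0 then Mo S T 3 0 else
    0)"


lemma prod4: "(\<Prod>q<4. (f::nat \<Rightarrow> complex) q) = f 0 * f 1 * f 2 * f 3"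
  by (simp add: numeral_eq_Suc)

lemma uu_expl: "uu g k a = (kraus_ad4 g k a 7 + kraus_ad4 g k a 11 + kraus_ad4 g k a 13 + kraus_ad4 g k a 14) / 2"
  unfolding uu_def sum16 by (simp add: dicke43_def add_divide_distrib)

lemma uu_tab: "k < 16 \<Longrightarrow> a < 16 \<Longrightarrow> uu g k a = Utab (complex_of_real (sqrt g)) (complex_of_real (sqrt (1 - g))) k a"
  unfolding uu_expl kraus_ad4_def prod4
  apply (drule less16_cases, drule less16_cases)
  apply (elim disjE)
  apply (simp_all add: kraus_ad_def bitq_def Utab_def Mo_def power2_eq_square power3_eq_cube numeral_3_eq_3[symmetric])
  done


definition wt :: "nat \<Rightarrow> nat" where "wt x = bitq 0 x + bitq 1 x + bitq 2 x + bitq 3 x"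

definition rhoR :: "real \<Rightarrow> nat \<Rightarrow> nat \<Rightarrow> real" where
  "rhoR g a b = (if wt a \<noteq> wt b then 0 else if wt a = 3 then (1-g)^3/4 else if wt a = 0 then g^3
     else if wt a = 1 then (if a = b then 3*g^2*(1-g)/4 else g^2*(1-g)/4)
     else if wt a = 2 then (if a = b then g*(1-g)^2/2 else if a + b = 15 then 0 else g*(1-g)^2/4) else 0)"

lemma wt_vals: "wt 0 = 0" "wt 1 = 1" "wt 2 = 1" "wt 3 = 2" "wt 4 = 1" "wt 5 = 2" "wt 6 = 2" "wt 7 = 3"
  "wt 8 = 1" "wt 9 = 2" "wt 10 = 2" "wt 11 = 3" "wt 12 = 2" "wt 13 = 3" "wt 14 = 3" "wt 15 = 4" "wt (Suc 0) = 1"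
  by (simp_all add: wt_def bitq_def)

lemma Mo_sq:
  assumes "0 \<le> g" "g \<le> 1"
  shows "Mo (complex_of_real (sqrt g)) (complex_of_real (sqrt (1-g))) m n * cnj (Mo (complex_of_real (sqrt g)) (complex_of_real (sqrt (1-g))) m n)
     = complex_of_real (g^m * (1-g)^n / 4)"
proof -
  have "Mo (complex_of_real (sqrt g)) (complex_of_real (sqrt (1-g))) m n = complex_of_real (sqrt g ^ m * sqrt (1-g) ^ n / 2)"
    by (simp add: Mo_def)
  moreover have "(sqrt g ^ m * sqrt (1-g) ^ n / 2) * (sqrt g ^ m * sqrt (1-g) ^ n / 2) = g^m * (1-g)^n / 4"
  proof -
    have e1: "sqrt g ^ m * sqrt g ^ m = g^m"
      using assms by (metis power_mult_distrib real_sqrt_mult_self abs_of_nonneg)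
    have e2: "sqrt (1-g) ^ n * sqrt (1-g) ^ n = (1-g)^n"
      using assms by (metis power_mult_distrib real_sqrt_mult_self abs_of_nonneg diff_ge_0_iff_ge)
    have "(sqrt g ^ m * sqrt (1-g) ^ n / 2) * (sqrt g ^ m * sqrt (1-g) ^ n / 2) = (sqrt g ^ m * sqrt g ^ m) * (sqrt (1-g) ^ n * sqrt (1-g) ^ n) / 4"
      by (simp add: algebra_simps)
    then show ?thesis using e1 e2 by simp
  qed
  ultimately show ?thesis by (metis of_real_mult complex_cnj_complex_of_real)
qed

lemma Utab_cnj_zero: "Utab S T k a = 0 \<Longrightarrow> Utab S T k a * cnj (Utab S T k b) = 0" by simp

lemma rho_closed:
  assumes g: "0 \<le> g" "g \<le> 1" and ab: "a < 16" "b < 16"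
  shows "rho43 g a b = complex_of_real (rhoR g a b)"
proof -
  let ?S = "complex_of_real (sqrt g)" and ?T = "complex_of_real (sqrt (1 - g))"
  have "rho43 g a b = (\<Sum>k<16. Utab ?S ?T k a * cnj (Utab ?S ?T k b))"
    unfolding rho_uu by (rule sum.cong) (simp_all add: uu_tab ab)
  also have "\<dots> = complex_of_real (rhoR g a b)"
    using ab unfolding sum16
    apply -
    apply (drule less16_cases, drule less16_cases)
    apply (elim disjE)
    apply (simp_all add: Utab_def Mo_sq[OF g] rhoR_def wt_vals)
    done
  finally show ?thesis .
qed

definition QS :: "op4 \<Rightarrow> nat list \<Rightarrow> complex" where
  "QS M S = (\<Sum>a\<leftarrow>S. \<Sum>b\<leftarrow>S. M a b)"

lemma sum_list_cmult: "(\<Sum>a\<leftarrow>S. c * f a) = c * (\<Sum>a\<leftarrow>S. f a :: complex)"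
  by (induction S) (auto simp: algebra_simps)
lemma sum_list_multc: "(\<Sum>a\<leftarrow>S. f a * c) = (\<Sum>a\<leftarrow>S. f a) * (c :: complex)"
  by (induction S) (auto simp: algebra_simps)
lemma cnj_sum_list: "cnj (\<Sum>a\<leftarrow>S. f a) = (\<Sum>a\<leftarrow>S. cnj (f a))"
  by (induction S) auto
lemma sum_list_swap: "(\<Sum>a\<leftarrow>S. \<Sum>k<n. g k a) = (\<Sum>k<n. \<Sum>a\<leftarrow>S. (g k a :: complex))"
  by (induction S) (auto simp: sum.distrib)

lemma QS_rank1: "QS (\<lambda>a b. v a * cnj (v b)) S = complex_of_real ((cmod (\<Sum>a\<leftarrow>S. v a))^2)"
proof -
  have "QS (\<lambda>a b. v a * cnj (v b)) S = (\<Sum>a\<leftarrow>S. v a * (\<Sum>b\<leftarrow>S. cnj (v b)))"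
    unfolding QS_def by (simp add: sum_list_cmult)
  also have "\<dots> = (\<Sum>a\<leftarrow>S. v a) * cnj (\<Sum>b\<leftarrow>S. v b)"
    by (simp add: sum_list_multc cnj_sum_list)
  also have "\<dots> = complex_of_real ((cmod (\<Sum>a\<leftarrow>S. v a))^2)"
    by (rule complex_norm_square[symmetric])
  finally show ?thesis .
qed

lemma QS_lin: "QS (\<lambda>a b. \<Sum>k<n. f k a b) S = (\<Sum>k<n. QS (f k) S)"
  unfolding QS_def by (simp add: sum_list_swap)

lemma QS_cong: "(\<And>a b. a \<in> set S \<Longrightarrow> b \<in> set S \<Longrightarrow> M a b = M' a b) \<Longrightarrow> QS M S = QS M' S"
  unfolding QS_def by (auto intro!: arg_cong[where f=sum_list] map_cong)

definition Lw :: "op4 \<Rightarrow> complex" where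
  "Lw M = 3 * QS M [0,15] + 2 * (QS M [3,12] + QS M [5,10] + QS M [6,9]) - QS M [3,5,6,9,10,12]"

definition Lz :: "op4 \<Rightarrow> complex" where
  "Lz M = 2 * (QS M [7] + QS M [11] + QS M [13] + QS M [14]) + 16 * (QS M [1] + QS M [2] + QS M [4] + QS M [8]) - QS M [7,11,13,14]"

lemma Lw_cong: "(\<And>a b. a < 16 \<Longrightarrow> b < 16 \<Longrightarrow> M a b = M' a b) \<Longrightarrow> Lw M = Lw M'"
  unfolding Lw_def by (intro arg_cong2[where f="(-)"] arg_cong2[where f="(+)"] arg_cong2[where f="(*)"] QS_cong refl) auto

lemma Lz_cong: "(\<And>a b. a < 16 \<Longrightarrow> b < 16 \<Longrightarrow> M a b = M' a b) \<Longrightarrow> Lz M = Lz M'"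
  unfolding Lz_def by (intro arg_cong2[where f="(-)"] arg_cong2[where f="(+)"] arg_cong2[where f="(*)"] QS_cong refl) auto

lemma Lw_lin: "Lw (\<lambda>a b. \<Sum>k<n. complex_of_real (w k) * \<sigma> k a b) = (\<Sum>k<n. complex_of_real (w k) * Lw (\<sigma> k))"
  unfolding Lw_def QS_lin by (simp add: QS_def sum_list_cmult sum.distrib sum_distrib_left sum_subtractf algebra_simps)

lemma Lz_lin: "Lz (\<lambda>a b. \<Sum>k<n. complex_of_real (w k) * \<sigma> k a b) = (\<Sum>k<n. complex_of_real (w k) * Lz (\<sigma> k))"
  unfolding Lz_def QS_lin by (simp add: QS_def sum_list_cmult sum.distrib sum_distrib_left sum_subtractf algebra_simps)

lemma Lw_rho: assumes "0 \<le> g" "g \<le> 1" shows "Lw (rho43 g) = complex_of_real (3*g*(2*g-1))"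
proof -
  have "Lw (rho43 g) = Lw (\<lambda>a b. complex_of_real (rhoR g a b))"
    by (rule Lw_cong) (simp add: rho_closed assms)
  also have "\<dots> = complex_of_real (3*g*(2*g-1))"
    by (simp add: Lw_def QS_def rhoR_def wt_vals) (simp add: algebra_simps power2_eq_square power3_eq_cube)
  finally show ?thesis .
qed

lemma Lz_rho0: "Lz (rho43 0) = complex_of_real (-2)"
proof -
  have "Lz (rho43 0) = Lz (\<lambda>a b. complex_of_real (rhoR 0 a b))"
    by (rule Lz_cong) (simp add: rho_closed)
  also have "\<dots> = complex_of_real (-2)"
    by (simp add: Lz_def QS_def rhoR_def wt_vals)
  finally show ?thesis .
qed

lemma cmod_r2: "(cmod (complex_of_real (sqrt 2) * z))^2 = 2 * (cmod z)^2"
  by (simp add: norm_mult power_mult_distrib)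

lemma Lz_stab:
  assumes "C \<in> clifford4" shows "\<exists>r\<ge>0. Lz (stab_dm C) = complex_of_real r"
proof -
  define v where "v x = C x 0" for x
  have I: "Inv v" unfolding v_def using Inv_clifford[OF assms] .
  have sd: "stab_dm C = (\<lambda>a b. v a * cnj (v b))" unfolding stab_dm_def v_def by simp
  have "Lz (stab_dm C) = complex_of_real (2 * ((cmod (v 7))^2 + (cmod (v 11))^2 + (cmod (v 13))^2 + (cmod (v 14))^2)
      + 16 * ((cmod (v 1))^2 + (cmod (v 2))^2 + (cmod (v 4))^2 + (cmod (v 8))^2) - (cmod (v 7 + v 11 + v 13 + v 14))^2)"
    unfolding Lz_def sd QS_rank1 by (simp add: add.assoc)
  moreover have "0 \<le> 2 * ((cmod (v 7))^2 + (cmod (v 11))^2 + (cmod (v 13))^2 + (cmod (v 14))^2)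
      + 16 * ((cmod (v 1))^2 + (cmod (v 2))^2 + (cmod (v 4))^2 + (cmod (v 8))^2) - (cmod (v 7 + v 11 + v 13 + v 14))^2"
    using core_ineq0[OF I] by simp
  ultimately show ?thesis by blast
qed

lemma Lw_stab:
  assumes "C \<in> clifford4" shows "\<exists>r\<ge>0. Lw (stab_dm C) = complex_of_real r"
proof -
  define v where "v x = C x 0" for x
  have I: "Inv v" unfolding v_def using Inv_clifford[OF assms] .
  have sd: "stab_dm C = (\<lambda>a b. v a * cnj (v b))" unfolding stab_dm_def v_def by simp
  define v1 where "v1 x = (\<Sum>k<16. cnot 0 1 x k * v k)" for x
  define v2 where "v2 x = (\<Sum>k<16. cnot 0 2 x k * v1 k)" for x
  define v3 where "v3 x = (\<Sum>k<16. cnot 0 3 x k * v2 k)" for x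
  define p where "p x = (\<Sum>k<16. on_qubit 0 hadamard x k * v3 k)" for x
  have I1: "Inv v1" unfolding v1_def by (rule Inv_CX[OF I]) auto
  have I2: "Inv v2" unfolding v2_def by (rule Inv_CX[OF I1]) auto
  have I3: "Inv v3" unfolding v3_def by (rule Inv_CX[OF I2]) auto
  have Ip: "Inv p" unfolding p_def by (rule Inv_H[OF I3]) auto
  have e1: "v1 x = v (pix 0 1 x)" if "x < 16" for x unfolding v1_def by (rule G2) (use that in auto)
  have e2: "v2 x = v1 (pix 0 2 x)" if "x < 16" for x unfolding v2_def by (rule G2) (use that in auto)
  have e3: "v3 x = v2 (pix 0 3 x)" if "x < 16" for x unfolding v3_def by (rule G2) (use that in auto)
  have ep: "p x = (v3 (xz 0 x) + (if bitq 0 x = 0 then 1 else -1) * v3 (xz 0 x XOR ee 0)) / complex_of_real (sqrt 2)" if "x < 16" for x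
    unfolding p_def by (rule H_formula) (use that in auto)
  let ?r = "complex_of_real (sqrt 2)"
  have r0: "?r \<noteq> 0" by simp
  have p0: "v 0 + v 15 = ?r * p 0"
    using r0 by (simp add: ep e3 e2 e1 xz_def ee_def pix_def bitq_def numeral_3_eq_3[symmetric])
  have p3: "v 3 + v 12 = ?r * p 3"
    using r0 by (simp add: ep e3 e2 e1 xz_def ee_def pix_def bitq_def numeral_3_eq_3[symmetric])
  have p5: "v 5 + v 10 = ?r * p 5"
    using r0 by (simp add: ep e3 e2 e1 xz_def ee_def pix_def bitq_def numeral_3_eq_3[symmetric])
  have p6: "v 6 + v 9 = ?r * p 6"
    using r0 by (simp add: ep e3 e2 e1 xz_def ee_def pix_def bitq_def numeral_3_eq_3[symmetric])
  have s6: "v 3 + (v 5 + (v 6 + (v 9 + (v 10 + v 12)))) = ?r * (p 3 + p 5 + p 6)"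
  proof -
    have "v 3 + (v 5 + (v 6 + (v 9 + (v 10 + v 12)))) = (v 3 + v 12) + (v 5 + v 10) + (v 6 + v 9)" by (simp add: algebra_simps)
    also have "\<dots> = ?r * (p 3 + p 5 + p 6)" unfolding p3 p5 p6 by (simp add: algebra_simps)
    finally show ?thesis .
  qed
  have "Lw (stab_dm C) = complex_of_real (3 * (cmod (v 0 + v 15))^2 + 2 * ((cmod (v 3 + v 12))^2 + (cmod (v 5 + v 10))^2 + (cmod (v 6 + v 9))^2)
      - (cmod (v 3 + (v 5 + (v 6 + (v 9 + (v 10 + v 12))))))^2)"
    unfolding Lw_def sd QS_rank1 by simp
  also have "\<dots> = complex_of_real (2 * (3 * (cmod (p 0))^2 + 2 * ((cmod (p 3))^2 + (cmod (p 5))^2 + (cmod (p 6))^2) - (cmod (p 3 + p 5 + p 6))^2))"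
    unfolding p0 p3 p5 p6 s6 cmod_r2 by (simp add: algebra_simps)
  finally have eq: "Lw (stab_dm C) = complex_of_real (2 * (3 * (cmod (p 0))^2 + 2 * ((cmod (p 3))^2 + (cmod (p 5))^2 + (cmod (p 6))^2) - (cmod (p 3 + p 5 + p 6))^2))" .
  have "0 \<le> 2 * (3 * (cmod (p 0))^2 + 2 * ((cmod (p 3))^2 + (cmod (p 5))^2 + (cmod (p 6))^2) - (cmod (p 3 + p 5 + p 6))^2)"
    using core_ineq[OF Ip] by simp
  then show ?thesis using eq by blast
qed

definition Reach :: "(nat \<Rightarrow> complex) \<Rightarrow> bool" where
  "Reach v \<longleftrightarrow> (\<exists>C\<in>clifford4. \<forall>x<16. C x 0 = v x)"

definition hh :: complex where "hh = complex_of_real (1 / sqrt 2)"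

lemma r_hh: "complex_of_real (sqrt 2) * hh = 1"
proof -
  have "complex_of_real (sqrt 2) * complex_of_real (1/sqrt 2) = complex_of_real (sqrt 2 * (1 / sqrt 2))"
    by (rule of_real_mult[symmetric])
  then show ?thesis unfolding hh_def by simp
qed

lemma r2hh: "complex_of_real (sqrt 2) * (hh * c) = c" "complex_of_real (sqrt 2) * (hh^2 * c) = hh * c"
  "complex_of_real (sqrt 2) * (hh^3 * c) = hh^2 * c" "complex_of_real (sqrt 2) * hh = 1"
  "complex_of_real (sqrt 2) * hh^2 = hh" "complex_of_real (sqrt 2) * hh^3 = hh^2"
  by (simp_all add: power2_eq_square power3_eq_cube mult.assoc[symmetric] r_hh)

lemma all16: "(\<forall>x<16. P x) \<longleftrightarrow> P 0 \<and> P 1 \<and> P 2 \<and> P 3 \<and> P 4 \<and> P 5 \<and> P 6 \<and> P 7 \<and> P 8 \<and> P 9 \<and> P 10 \<and> P 11 \<and> P 12 \<and> P 13 \<and> P 14 \<and> P (15::nat)"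
proof
  assume "P 0 \<and> P 1 \<and> P 2 \<and> P 3 \<and> P 4 \<and> P 5 \<and> P 6 \<and> P 7 \<and> P 8 \<and> P 9 \<and> P 10 \<and> P 11 \<and> P 12 \<and> P 13 \<and> P 14 \<and> P (15::nat)"
  then show "\<forall>x<16. P x" using less16_cases by blast
qed simp

lemma Reach_id: "Reach (\<lambda>x. if x = 0 then 1 else 0)"
  unfolding Reach_def by (rule bexI[OF _ clifford4.clifford_id]) (simp add: id4_def)

lemma Reach_cong: "Reach v \<Longrightarrow> (\<forall>x<16. w x = v x) \<Longrightarrow> Reach w"
  unfolding Reach_def by auto

lemma RH:
  assumes "Reach v" "q < 4" "\<forall>x<16. complex_of_real (sqrt 2) * w x = v (xz q x) + (if bitq q x = 0 then 1 else -1) * v (xz q x XOR ee q)"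
  shows "Reach w"
proof -
  obtain C where C: "C \<in> clifford4" "\<forall>x<16. C x 0 = v x" using assms(1) Reach_def by auto
  have "mmult (on_qubit q hadamard) C \<in> clifford4" by (rule clifford4.intros(2)[OF C(1) assms(2)])
  moreover have "\<forall>x<16. mmult (on_qubit q hadamard) C x 0 = w x"
  proof (intro allI impI)
    fix x :: nat assume x: "x < 16"
    have "mmult (on_qubit q hadamard) C x 0 = (\<Sum>k<16. on_qubit q hadamard x k * v k)"
      unfolding mmult_def using C(2) by (intro sum.cong) auto
    also have "\<dots> = (v (xz q x) + (if bitq q x = 0 then 1 else -1) * v (xz q x XOR ee q)) / complex_of_real (sqrt 2)"
      by (rule H_formula[OF assms(2) x])
    also have "\<dots> = w x" using assms(3) x by (simp add: field_simps)
    finally show "mmult (on_qubit q hadamard) C x 0 = w x" .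
  qed
  ultimately show ?thesis unfolding Reach_def by blast
qed

lemma RS:
  assumes "Reach v" "q < 4" "\<forall>x<16. w x = (if bitq q x = 0 then 1 else \<i>) * v x"
  shows "Reach w"
proof -
  obtain C where C: "C \<in> clifford4" "\<forall>x<16. C x 0 = v x" using assms(1) Reach_def by auto
  have "mmult (on_qubit q phaseS) C \<in> clifford4" by (rule clifford4.intros(3)[OF C(1) assms(2)])
  moreover have "\<forall>x<16. mmult (on_qubit q phaseS) C x 0 = w x"
  proof (intro allI impI)
    fix x :: nat assume x: "x < 16"
    have "mmult (on_qubit q phaseS) C x 0 = (\<Sum>k<16. on_qubit q phaseS x k * v k)"
      unfolding mmult_def using C(2) by (intro sum.cong) auto
    also have "\<dots> = phaseS (bitq q x) (bitq q x) * v x + phaseS (bitq q x) (1 - bitq q x) * v (x XOR 2^(3-q))"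
      by (rule G1[OF assms(2) x])
    also have "\<dots> = w x" using assms(3) x bitq_01[of q x] by (auto simp: phaseS_def)
    finally show "mmult (on_qubit q phaseS) C x 0 = w x" .
  qed
  ultimately show ?thesis unfolding Reach_def by blast
qed

lemma RC:
  assumes "Reach v" "c < 4" "t < 4" "c \<noteq> t" "\<forall>x<16. w x = v (pix c t x)"
  shows "Reach w"
proof -
  obtain C where C: "C \<in> clifford4" "\<forall>x<16. C x 0 = v x" using assms(1) Reach_def by auto
  have "mmult (cnot c t) C \<in> clifford4" by (rule clifford4.intros(4)[OF C(1) assms(2-4)])
  moreover have "\<forall>x<16. mmult (cnot c t) C x 0 = w x"
  proof (intro allI impI)
    fix x :: nat assume x: "x < 16"
    have "mmult (cnot c t) C x 0 = (\<Sum>k<16. cnot c t x k * v k)"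
      unfolding mmult_def using C(2) by (intro sum.cong) auto
    also have "\<dots> = v (pix c t x)" by (rule G2[OF assms(2-4) x])
    also have "\<dots> = w x" using assms(5) x by simp
    finally show "mmult (cnot c t) C x 0 = w x" .
  qed
  ultimately show ?thesis unfolding Reach_def by blast
qed

lemma bitq_xz_self: "q<4 \<Longrightarrow> bitq q (xz q x) = 0" by (simp add: bitq_xz)
lemma xz_xz: "q<4 \<Longrightarrow> x < 16 \<Longrightarrow> xz q (xz q x) = xz q x" by (subst xz_def) (simp add: bitq_xz)
lemma bitq_xz_e: "q<4 \<Longrightarrow> bitq q (xz q x XOR ee q) = 1" by (simp add: bitq_xor_ee bitq_xz)
lemma xz_xz_e: "q<4 \<Longrightarrow> x < 16 \<Longrightarrow> xz q (xz q x XOR ee q) = xz q x"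
  by (subst xz_def) (simp add: bitq_xz_e xor_cancel3)

lemma RX:
  assumes R: "Reach v" and q: "q < 4" and w: "\<forall>x<16. w x = v (x XOR ee q)"
  shows "Reach w"
proof -
  let ?r = "complex_of_real (sqrt 2)"
  have r0: "?r \<noteq> 0" by simp
  define v1 where "v1 x = (v (xz q x) + (if bitq q x = 0 then 1 else -1) * v (xz q x XOR ee q)) / ?r" for x
  define v2 where "v2 x = (if bitq q x = 0 then 1 else \<i>) * v1 x" for x
  define v3 where "v3 x = (if bitq q x = 0 then 1 else \<i>) * v2 x" for x
  define v4 where "v4 x = (v3 (xz q x) + (if bitq q x = 0 then 1 else -1) * v3 (xz q x XOR ee q)) / ?r" for x
  have R1: "Reach v1" by (rule RH[OF R q]) (simp add: v1_def)
  have R2: "Reach v2" by (rule RS[OF R1 q]) (simp add: v2_def)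
  have R3: "Reach v3" by (rule RS[OF R2 q]) (simp add: v3_def)
  have R4: "Reach v4" by (rule RH[OF R3 q]) (simp add: v4_def)
  show ?thesis
  proof (rule Reach_cong[OF R4], intro allI impI)
    fix x :: nat assume x: "x < 16"
    have xs: "xz q x < 16" using xz_lt[OF x q] .
    have a: "v3 (xz q x) = (v (xz q x) + v (xz q x XOR ee q)) / ?r"
      unfolding v3_def v2_def v1_def using q x by (simp add: bitq_xz_self xz_xz)
    have b: "v3 (xz q x XOR ee q) = (v (xz q x XOR ee q) - v (xz q x)) / ?r"
      unfolding v3_def v2_def v1_def using q x by (simp add: bitq_xz_e xz_xz_e)
    have rr: "?r * ?r = 2" by (rule sqrt2_c)
    show "w x = v4 x"
    proof (cases "bitq q x = 0")
      case True
      then have "xz q x = x" by (simp add: xz_def)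
      then show ?thesis unfolding v4_def a b using True w x r0 rr
        by (simp add: field_simps)
    next
      case False
      then have "xz q x = x XOR ee q" by (simp add: xz_def)
      then show ?thesis unfolding v4_def a b using False w x r0 rr
        by (simp add: field_simps)
    qed
  qed
qed

definition pat_e0 :: "nat \<Rightarrow> real" where
  "pat_e0 = (\<lambda>x. if x = 0 then 1 else 0)"


lemma st_e0: "Reach (\<lambda>x. 1 * 1 * complex_of_real (pat_e0 x))"
proof -

  show ?thesis by (rule Reach_cong[OF Reach_id]) (simp add: pat_e0_def all16 xz_def ee_def bitq_def pix_def r2hh numeral_3_eq_3[symmetric] mult_ac)
qed

definition pat_b0 :: "nat \<Rightarrow> real" where
  "pat_b0 = (\<lambda>x. if x = 8 then 1 else 0)"


lemma st_b0: "Reach (\<lambda>x. 1 * 1 * complex_of_real (pat_b0 x))"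
proof -
  have R0: "Reach (\<lambda>x. if x = 8 then 1 else 0)"
    by (rule RX[where q=0, OF Reach_id]) (simp_all add: all16 xz_def ee_def bitq_def pix_def r2hh numeral_3_eq_3[symmetric] mult_ac)
  show ?thesis by (rule Reach_cong[OF R0]) (simp add: pat_b0_def all16 xz_def ee_def bitq_def pix_def r2hh numeral_3_eq_3[symmetric] mult_ac)
qed

definition pat_b1 :: "nat \<Rightarrow> real" where
  "pat_b1 = (\<lambda>x. if x = 4 then 1 else 0)"


lemma st_b1: "Reach (\<lambda>x. 1 * 1 * complex_of_real (pat_b1 x))"
proof -
  have R0: "Reach (\<lambda>x. if x = 4 then 1 else 0)"
    by (rule RX[where q=1, OF Reach_id]) (simp_all add: all16 xz_def ee_def bitq_def pix_def r2hh numeral_3_eq_3[symmetric] mult_ac)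
  show ?thesis by (rule Reach_cong[OF R0]) (simp add: pat_b1_def all16 xz_def ee_def bitq_def pix_def r2hh numeral_3_eq_3[symmetric] mult_ac)
qed

definition pat_b2 :: "nat \<Rightarrow> real" where
  "pat_b2 = (\<lambda>x. if x = 2 then 1 else 0)"


lemma st_b2: "Reach (\<lambda>x. 1 * 1 * complex_of_real (pat_b2 x))"
proof -
  have R0: "Reach (\<lambda>x. if x = 2 then 1 else 0)"
    by (rule RX[where q=2, OF Reach_id]) (simp_all add: all16 xz_def ee_def bitq_def pix_def r2hh numeral_3_eq_3[symmetric] mult_ac)
  show ?thesis by (rule Reach_cong[OF R0]) (simp add: pat_b2_def all16 xz_def ee_def bitq_def pix_def r2hh numeral_3_eq_3[symmetric] mult_ac)
qed

definition pat_b3 :: "nat \<Rightarrow> real" where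
  "pat_b3 = (\<lambda>x. if x = 1 then 1 else 0)"


lemma st_b3: "Reach (\<lambda>x. 1 * 1 * complex_of_real (pat_b3 x))"
proof -
  have R0: "Reach (\<lambda>x. if x = 1 then 1 else 0)"
    by (rule RX[where q=3, OF Reach_id]) (simp_all add: all16 xz_def ee_def bitq_def pix_def r2hh numeral_3_eq_3[symmetric] mult_ac)
  show ?thesis by (rule Reach_cong[OF R0]) (simp add: pat_b3_def all16 xz_def ee_def bitq_def pix_def r2hh numeral_3_eq_3[symmetric] mult_ac)
qed

definition pat_pr01 :: "nat \<Rightarrow> real" where
  "pat_pr01 = (\<lambda>x. if x = 4 then 1 else if x = 8 then 1 else 0)"


lemma st_pr01: "Reach (\<lambda>x. 1 * hh * complex_of_real (pat_pr01 x))"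
proof -
  have R0: "Reach (\<lambda>x. if x = 0 then hh * 1 else if x = 8 then hh * 1 else 0)"
    by (rule RH[where q=0, OF Reach_id]) (simp_all add: all16 xz_def ee_def bitq_def pix_def r2hh numeral_3_eq_3[symmetric])
  have R1: "Reach (\<lambda>x. if x = 0 then hh * 1 else if x = 12 then hh * 1 else 0)"
    by (rule RC[where c=0 and t=1, OF R0]) (simp_all add: all16 xz_def ee_def bitq_def pix_def r2hh numeral_3_eq_3[symmetric] mult_ac)
  have R2: "Reach (\<lambda>x. if x = 4 then hh * 1 else if x = 8 then hh * 1 else 0)"
    by (rule RX[where q=0, OF R1]) (simp_all add: all16 xz_def ee_def bitq_def pix_def r2hh numeral_3_eq_3[symmetric] mult_ac)
  show ?thesis by (rule Reach_cong[OF R2]) (simp add: pat_pr01_def all16 xz_def ee_def bitq_def pix_def r2hh numeral_3_eq_3[symmetric] mult_ac)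
qed

definition pat_pr02 :: "nat \<Rightarrow> real" where
  "pat_pr02 = (\<lambda>x. if x = 2 then 1 else if x = 8 then 1 else 0)"


lemma st_pr02: "Reach (\<lambda>x. 1 * hh * complex_of_real (pat_pr02 x))"
proof -
  have R0: "Reach (\<lambda>x. if x = 0 then hh * 1 else if x = 8 then hh * 1 else 0)"
    by (rule RH[where q=0, OF Reach_id]) (simp_all add: all16 xz_def ee_def bitq_def pix_def r2hh numeral_3_eq_3[symmetric])
  have R1: "Reach (\<lambda>x. if x = 0 then hh * 1 else if x = 10 then hh * 1 else 0)"
    by (rule RC[where c=0 and t=2, OF R0]) (simp_all add: all16 xz_def ee_def bitq_def pix_def r2hh numeral_3_eq_3[symmetric] mult_ac)
  have R2: "Reach (\<lambda>x. if x = 2 then hh * 1 else if x = 8 then hh * 1 else 0)"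
    by (rule RX[where q=0, OF R1]) (simp_all add: all16 xz_def ee_def bitq_def pix_def r2hh numeral_3_eq_3[symmetric] mult_ac)
  show ?thesis by (rule Reach_cong[OF R2]) (simp add: pat_pr02_def all16 xz_def ee_def bitq_def pix_def r2hh numeral_3_eq_3[symmetric] mult_ac)
qed

definition pat_pr03 :: "nat \<Rightarrow> real" where
  "pat_pr03 = (\<lambda>x. if x = 1 then 1 else if x = 8 then 1 else 0)"


lemma st_pr03: "Reach (\<lambda>x. 1 * hh * complex_of_real (pat_pr03 x))"
proof -
  have R0: "Reach (\<lambda>x. if x = 0 then hh * 1 else if x = 8 then hh * 1 else 0)"
    by (rule RH[where q=0, OF Reach_id]) (simp_all add: all16 xz_def ee_def bitq_def pix_def r2hh numeral_3_eq_3[symmetric])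
  have R1: "Reach (\<lambda>x. if x = 0 then hh * 1 else if x = 9 then hh * 1 else 0)"
    by (rule RC[where c=0 and t=3, OF R0]) (simp_all add: all16 xz_def ee_def bitq_def pix_def r2hh numeral_3_eq_3[symmetric] mult_ac)
  have R2: "Reach (\<lambda>x. if x = 1 then hh * 1 else if x = 8 then hh * 1 else 0)"
    by (rule RX[where q=0, OF R1]) (simp_all add: all16 xz_def ee_def bitq_def pix_def r2hh numeral_3_eq_3[symmetric] mult_ac)
  show ?thesis by (rule Reach_cong[OF R2]) (simp add: pat_pr03_def all16 xz_def ee_def bitq_def pix_def r2hh numeral_3_eq_3[symmetric] mult_ac)
qed

definition pat_pr12 :: "nat \<Rightarrow> real" where
  "pat_pr12 = (\<lambda>x. if x = 2 then 1 else if x = 4 then 1 else 0)"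


lemma st_pr12: "Reach (\<lambda>x. 1 * hh * complex_of_real (pat_pr12 x))"
proof -
  have R0: "Reach (\<lambda>x. if x = 0 then hh * 1 else if x = 4 then hh * 1 else 0)"
    by (rule RH[where q=1, OF Reach_id]) (simp_all add: all16 xz_def ee_def bitq_def pix_def r2hh numeral_3_eq_3[symmetric])
  have R1: "Reach (\<lambda>x. if x = 0 then hh * 1 else if x = 6 then hh * 1 else 0)"
    by (rule RC[where c=1 and t=2, OF R0]) (simp_all add: all16 xz_def ee_def bitq_def pix_def r2hh numeral_3_eq_3[symmetric] mult_ac)
  have R2: "Reach (\<lambda>x. if x = 2 then hh * 1 else if x = 4 then hh * 1 else 0)"
    by (rule RX[where q=1, OF R1]) (simp_all add: all16 xz_def ee_def bitq_def pix_def r2hh numeral_3_eq_3[symmetric] mult_ac)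
  show ?thesis by (rule Reach_cong[OF R2]) (simp add: pat_pr12_def all16 xz_def ee_def bitq_def pix_def r2hh numeral_3_eq_3[symmetric] mult_ac)
qed

definition pat_pr13 :: "nat \<Rightarrow> real" where
  "pat_pr13 = (\<lambda>x. if x = 1 then 1 else if x = 4 then 1 else 0)"


lemma st_pr13: "Reach (\<lambda>x. 1 * hh * complex_of_real (pat_pr13 x))"
proof -
  have R0: "Reach (\<lambda>x. if x = 0 then hh * 1 else if x = 4 then hh * 1 else 0)"
    by (rule RH[where q=1, OF Reach_id]) (simp_all add: all16 xz_def ee_def bitq_def pix_def r2hh numeral_3_eq_3[symmetric])
  have R1: "Reach (\<lambda>x. if x = 0 then hh * 1 else if x = 5 then hh * 1 else 0)"
    by (rule RC[where c=1 and t=3, OF R0]) (simp_all add: all16 xz_def ee_def bitq_def pix_def r2hh numeral_3_eq_3[symmetric] mult_ac)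
  have R2: "Reach (\<lambda>x. if x = 1 then hh * 1 else if x = 4 then hh * 1 else 0)"
    by (rule RX[where q=1, OF R1]) (simp_all add: all16 xz_def ee_def bitq_def pix_def r2hh numeral_3_eq_3[symmetric] mult_ac)
  show ?thesis by (rule Reach_cong[OF R2]) (simp add: pat_pr13_def all16 xz_def ee_def bitq_def pix_def r2hh numeral_3_eq_3[symmetric] mult_ac)
qed

definition pat_pr23 :: "nat \<Rightarrow> real" where
  "pat_pr23 = (\<lambda>x. if x = 1 then 1 else if x = 2 then 1 else 0)"


lemma st_pr23: "Reach (\<lambda>x. 1 * hh * complex_of_real (pat_pr23 x))"
proof -
  have R0: "Reach (\<lambda>x. if x = 0 then hh * 1 else if x = 2 then hh * 1 else 0)"
    by (rule RH[where q=2, OF Reach_id]) (simp_all add: all16 xz_def ee_def bitq_def pix_def r2hh numeral_3_eq_3[symmetric])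
  have R1: "Reach (\<lambda>x. if x = 0 then hh * 1 else if x = 3 then hh * 1 else 0)"
    by (rule RC[where c=2 and t=3, OF R0]) (simp_all add: all16 xz_def ee_def bitq_def pix_def r2hh numeral_3_eq_3[symmetric] mult_ac)
  have R2: "Reach (\<lambda>x. if x = 1 then hh * 1 else if x = 2 then hh * 1 else 0)"
    by (rule RX[where q=2, OF R1]) (simp_all add: all16 xz_def ee_def bitq_def pix_def r2hh numeral_3_eq_3[symmetric] mult_ac)
  show ?thesis by (rule Reach_cong[OF R2]) (simp add: pat_pr23_def all16 xz_def ee_def bitq_def pix_def r2hh numeral_3_eq_3[symmetric] mult_ac)
qed

definition pat_pp0 :: "nat \<Rightarrow> real" where
  "pat_pp0 = (\<lambda>x. if x = 0 then 1 else if x = 3 then 1 else if x = 5 then 1 else if x = 6 then 1 else 0)"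


lemma st_pp0: "Reach (\<lambda>x. 1 * hh^2 * complex_of_real (pat_pp0 x))"
proof -
  have R0: "Reach (\<lambda>x. if x = 0 then hh * 1 else if x = 4 then hh * 1 else 0)"
    by (rule RH[where q=1, OF Reach_id]) (simp_all add: all16 xz_def ee_def bitq_def pix_def r2hh numeral_3_eq_3[symmetric])
  have R1: "Reach (\<lambda>x. if x = 0 then hh^2 * 1 else if x = 2 then hh^2 * 1 else if x = 4 then hh^2 * 1 else if x = 6 then hh^2 * 1 else 0)"
    by (rule RH[where q=2, OF R0]) (simp_all add: all16 xz_def ee_def bitq_def pix_def r2hh numeral_3_eq_3[symmetric])
  have R2: "Reach (\<lambda>x. if x = 0 then hh^2 * 1 else if x = 2 then hh^2 * 1 else if x = 5 then hh^2 * 1 else if x = 7 then hh^2 * 1 else 0)"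
    by (rule RC[where c=1 and t=3, OF R1]) (simp_all add: all16 xz_def ee_def bitq_def pix_def r2hh numeral_3_eq_3[symmetric] mult_ac)
  have R3: "Reach (\<lambda>x. if x = 0 then hh^2 * 1 else if x = 3 then hh^2 * 1 else if x = 5 then hh^2 * 1 else if x = 6 then hh^2 * 1 else 0)"
    by (rule RC[where c=2 and t=3, OF R2]) (simp_all add: all16 xz_def ee_def bitq_def pix_def r2hh numeral_3_eq_3[symmetric] mult_ac)
  show ?thesis by (rule Reach_cong[OF R3]) (simp add: pat_pp0_def all16 xz_def ee_def bitq_def pix_def r2hh numeral_3_eq_3[symmetric] mult_ac)
qed

definition pat_pm0 :: "nat \<Rightarrow> real" where
  "pat_pm0 = (\<lambda>x. if x = 0 then 1 else if x = 3 then -1 else if x = 5 then -1 else if x = 6 then -1 else 0)"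


lemma st_pm0: "Reach (\<lambda>x. 1 * hh^2 * complex_of_real (pat_pm0 x))"
proof -
  have R0: "Reach (\<lambda>x. if x = 0 then hh * 1 else if x = 4 then hh * 1 else 0)"
    by (rule RH[where q=1, OF Reach_id]) (simp_all add: all16 xz_def ee_def bitq_def pix_def r2hh numeral_3_eq_3[symmetric])
  have R1: "Reach (\<lambda>x. if x = 0 then hh^2 * 1 else if x = 2 then hh^2 * 1 else if x = 4 then hh^2 * 1 else if x = 6 then hh^2 * 1 else 0)"
    by (rule RH[where q=2, OF R0]) (simp_all add: all16 xz_def ee_def bitq_def pix_def r2hh numeral_3_eq_3[symmetric])
  have R2: "Reach (\<lambda>x. if x = 0 then hh^2 * 1 else if x = 2 then hh^2 * 1 else if x = 5 then hh^2 * 1 else if x = 7 then hh^2 * 1 else 0)"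
    by (rule RC[where c=1 and t=3, OF R1]) (simp_all add: all16 xz_def ee_def bitq_def pix_def r2hh numeral_3_eq_3[symmetric] mult_ac)
  have R3: "Reach (\<lambda>x. if x = 0 then hh^2 * 1 else if x = 3 then hh^2 * 1 else if x = 5 then hh^2 * 1 else if x = 6 then hh^2 * 1 else 0)"
    by (rule RC[where c=2 and t=3, OF R2]) (simp_all add: all16 xz_def ee_def bitq_def pix_def r2hh numeral_3_eq_3[symmetric] mult_ac)
  have R4: "Reach (\<lambda>x. if x = 0 then hh^2 * 1 else if x = 3 then hh^2 * 1 else if x = 5 then hh^2 * \<i> else if x = 6 then hh^2 * \<i> else 0)"
    by (rule RS[where q=1, OF R3]) (simp_all add: all16 xz_def ee_def bitq_def pix_def r2hh numeral_3_eq_3[symmetric] mult_ac)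
  have R5: "Reach (\<lambda>x. if x = 0 then hh^2 * 1 else if x = 3 then hh^2 * \<i> else if x = 5 then hh^2 * \<i> else if x = 6 then hh^2 * -1 else 0)"
    by (rule RS[where q=2, OF R4]) (simp_all add: all16 xz_def ee_def bitq_def pix_def r2hh numeral_3_eq_3[symmetric] mult_ac)
  have R6: "Reach (\<lambda>x. if x = 0 then hh^2 * 1 else if x = 3 then hh^2 * -1 else if x = 5 then hh^2 * -1 else if x = 6 then hh^2 * -1 else 0)"
    by (rule RS[where q=3, OF R5]) (simp_all add: all16 xz_def ee_def bitq_def pix_def r2hh numeral_3_eq_3[symmetric] mult_ac)
  show ?thesis by (rule Reach_cong[OF R6]) (simp add: pat_pm0_def all16 xz_def ee_def bitq_def pix_def r2hh numeral_3_eq_3[symmetric] mult_ac)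
qed

definition pat_pp1 :: "nat \<Rightarrow> real" where
  "pat_pp1 = (\<lambda>x. if x = 0 then 1 else if x = 3 then 1 else if x = 9 then 1 else if x = 10 then 1 else 0)"


lemma st_pp1: "Reach (\<lambda>x. 1 * hh^2 * complex_of_real (pat_pp1 x))"
proof -
  have R0: "Reach (\<lambda>x. if x = 0 then hh * 1 else if x = 8 then hh * 1 else 0)"
    by (rule RH[where q=0, OF Reach_id]) (simp_all add: all16 xz_def ee_def bitq_def pix_def r2hh numeral_3_eq_3[symmetric])
  have R1: "Reach (\<lambda>x. if x = 0 then hh^2 * 1 else if x = 2 then hh^2 * 1 else if x = 8 then hh^2 * 1 else if x = 10 then hh^2 * 1 else 0)"
    by (rule RH[where q=2, OF R0]) (simp_all add: all16 xz_def ee_def bitq_def pix_def r2hh numeral_3_eq_3[symmetric])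
  have R2: "Reach (\<lambda>x. if x = 0 then hh^2 * 1 else if x = 2 then hh^2 * 1 else if x = 9 then hh^2 * 1 else if x = 11 then hh^2 * 1 else 0)"
    by (rule RC[where c=0 and t=3, OF R1]) (simp_all add: all16 xz_def ee_def bitq_def pix_def r2hh numeral_3_eq_3[symmetric] mult_ac)
  have R3: "Reach (\<lambda>x. if x = 0 then hh^2 * 1 else if x = 3 then hh^2 * 1 else if x = 9 then hh^2 * 1 else if x = 10 then hh^2 * 1 else 0)"
    by (rule RC[where c=2 and t=3, OF R2]) (simp_all add: all16 xz_def ee_def bitq_def pix_def r2hh numeral_3_eq_3[symmetric] mult_ac)
  show ?thesis by (rule Reach_cong[OF R3]) (simp add: pat_pp1_def all16 xz_def ee_def bitq_def pix_def r2hh numeral_3_eq_3[symmetric] mult_ac)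
qed

definition pat_pm1 :: "nat \<Rightarrow> real" where
  "pat_pm1 = (\<lambda>x. if x = 0 then 1 else if x = 3 then -1 else if x = 9 then -1 else if x = 10 then -1 else 0)"


lemma st_pm1: "Reach (\<lambda>x. 1 * hh^2 * complex_of_real (pat_pm1 x))"
proof -
  have R0: "Reach (\<lambda>x. if x = 0 then hh * 1 else if x = 8 then hh * 1 else 0)"
    by (rule RH[where q=0, OF Reach_id]) (simp_all add: all16 xz_def ee_def bitq_def pix_def r2hh numeral_3_eq_3[symmetric])
  have R1: "Reach (\<lambda>x. if x = 0 then hh^2 * 1 else if x = 2 then hh^2 * 1 else if x = 8 then hh^2 * 1 else if x = 10 then hh^2 * 1 else 0)"
    by (rule RH[where q=2, OF R0]) (simp_all add: all16 xz_def ee_def bitq_def pix_def r2hh numeral_3_eq_3[symmetric])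
  have R2: "Reach (\<lambda>x. if x = 0 then hh^2 * 1 else if x = 2 then hh^2 * 1 else if x = 9 then hh^2 * 1 else if x = 11 then hh^2 * 1 else 0)"
    by (rule RC[where c=0 and t=3, OF R1]) (simp_all add: all16 xz_def ee_def bitq_def pix_def r2hh numeral_3_eq_3[symmetric] mult_ac)
  have R3: "Reach (\<lambda>x. if x = 0 then hh^2 * 1 else if x = 3 then hh^2 * 1 else if x = 9 then hh^2 * 1 else if x = 10 then hh^2 * 1 else 0)"
    by (rule RC[where c=2 and t=3, OF R2]) (simp_all add: all16 xz_def ee_def bitq_def pix_def r2hh numeral_3_eq_3[symmetric] mult_ac)
  have R4: "Reach (\<lambda>x. if x = 0 then hh^2 * 1 else if x = 3 then hh^2 * 1 else if x = 9 then hh^2 * \<i> else if x = 10 then hh^2 * \<i> else 0)"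
    by (rule RS[where q=0, OF R3]) (simp_all add: all16 xz_def ee_def bitq_def pix_def r2hh numeral_3_eq_3[symmetric] mult_ac)
  have R5: "Reach (\<lambda>x. if x = 0 then hh^2 * 1 else if x = 3 then hh^2 * \<i> else if x = 9 then hh^2 * \<i> else if x = 10 then hh^2 * -1 else 0)"
    by (rule RS[where q=2, OF R4]) (simp_all add: all16 xz_def ee_def bitq_def pix_def r2hh numeral_3_eq_3[symmetric] mult_ac)
  have R6: "Reach (\<lambda>x. if x = 0 then hh^2 * 1 else if x = 3 then hh^2 * -1 else if x = 9 then hh^2 * -1 else if x = 10 then hh^2 * -1 else 0)"
    by (rule RS[where q=3, OF R5]) (simp_all add: all16 xz_def ee_def bitq_def pix_def r2hh numeral_3_eq_3[symmetric] mult_ac)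
  show ?thesis by (rule Reach_cong[OF R6]) (simp add: pat_pm1_def all16 xz_def ee_def bitq_def pix_def r2hh numeral_3_eq_3[symmetric] mult_ac)
qed

definition pat_pp2 :: "nat \<Rightarrow> real" where
  "pat_pp2 = (\<lambda>x. if x = 0 then 1 else if x = 5 then 1 else if x = 9 then 1 else if x = 12 then 1 else 0)"


lemma st_pp2: "Reach (\<lambda>x. 1 * hh^2 * complex_of_real (pat_pp2 x))"
proof -
  have R0: "Reach (\<lambda>x. if x = 0 then hh * 1 else if x = 8 then hh * 1 else 0)"
    by (rule RH[where q=0, OF Reach_id]) (simp_all add: all16 xz_def ee_def bitq_def pix_def r2hh numeral_3_eq_3[symmetric])
  have R1: "Reach (\<lambda>x. if x = 0 then hh^2 * 1 else if x = 4 then hh^2 * 1 else if x = 8 then hh^2 * 1 else if x = 12 then hh^2 * 1 else 0)"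
    by (rule RH[where q=1, OF R0]) (simp_all add: all16 xz_def ee_def bitq_def pix_def r2hh numeral_3_eq_3[symmetric])
  have R2: "Reach (\<lambda>x. if x = 0 then hh^2 * 1 else if x = 4 then hh^2 * 1 else if x = 9 then hh^2 * 1 else if x = 13 then hh^2 * 1 else 0)"
    by (rule RC[where c=0 and t=3, OF R1]) (simp_all add: all16 xz_def ee_def bitq_def pix_def r2hh numeral_3_eq_3[symmetric] mult_ac)
  have R3: "Reach (\<lambda>x. if x = 0 then hh^2 * 1 else if x = 5 then hh^2 * 1 else if x = 9 then hh^2 * 1 else if x = 12 then hh^2 * 1 else 0)"
    by (rule RC[where c=1 and t=3, OF R2]) (simp_all add: all16 xz_def ee_def bitq_def pix_def r2hh numeral_3_eq_3[symmetric] mult_ac)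
  show ?thesis by (rule Reach_cong[OF R3]) (simp add: pat_pp2_def all16 xz_def ee_def bitq_def pix_def r2hh numeral_3_eq_3[symmetric] mult_ac)
qed

definition pat_pm2 :: "nat \<Rightarrow> real" where
  "pat_pm2 = (\<lambda>x. if x = 0 then 1 else if x = 5 then -1 else if x = 9 then -1 else if x = 12 then -1 else 0)"


lemma st_pm2: "Reach (\<lambda>x. 1 * hh^2 * complex_of_real (pat_pm2 x))"
proof -
  have R0: "Reach (\<lambda>x. if x = 0 then hh * 1 else if x = 8 then hh * 1 else 0)"
    by (rule RH[where q=0, OF Reach_id]) (simp_all add: all16 xz_def ee_def bitq_def pix_def r2hh numeral_3_eq_3[symmetric])
  have R1: "Reach (\<lambda>x. if x = 0 then hh^2 * 1 else if x = 4 then hh^2 * 1 else if x = 8 then hh^2 * 1 else if x = 12 then hh^2 * 1 else 0)"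
    by (rule RH[where q=1, OF R0]) (simp_all add: all16 xz_def ee_def bitq_def pix_def r2hh numeral_3_eq_3[symmetric])
  have R2: "Reach (\<lambda>x. if x = 0 then hh^2 * 1 else if x = 4 then hh^2 * 1 else if x = 9 then hh^2 * 1 else if x = 13 then hh^2 * 1 else 0)"
    by (rule RC[where c=0 and t=3, OF R1]) (simp_all add: all16 xz_def ee_def bitq_def pix_def r2hh numeral_3_eq_3[symmetric] mult_ac)
  have R3: "Reach (\<lambda>x. if x = 0 then hh^2 * 1 else if x = 5 then hh^2 * 1 else if x = 9 then hh^2 * 1 else if x = 12 then hh^2 * 1 else 0)"
    by (rule RC[where c=1 and t=3, OF R2]) (simp_all add: all16 xz_def ee_def bitq_def pix_def r2hh numeral_3_eq_3[symmetric] mult_ac)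
  have R4: "Reach (\<lambda>x. if x = 0 then hh^2 * 1 else if x = 5 then hh^2 * 1 else if x = 9 then hh^2 * \<i> else if x = 12 then hh^2 * \<i> else 0)"
    by (rule RS[where q=0, OF R3]) (simp_all add: all16 xz_def ee_def bitq_def pix_def r2hh numeral_3_eq_3[symmetric] mult_ac)
  have R5: "Reach (\<lambda>x. if x = 0 then hh^2 * 1 else if x = 5 then hh^2 * \<i> else if x = 9 then hh^2 * \<i> else if x = 12 then hh^2 * -1 else 0)"
    by (rule RS[where q=1, OF R4]) (simp_all add: all16 xz_def ee_def bitq_def pix_def r2hh numeral_3_eq_3[symmetric] mult_ac)
  have R6: "Reach (\<lambda>x. if x = 0 then hh^2 * 1 else if x = 5 then hh^2 * -1 else if x = 9 then hh^2 * -1 else if x = 12 then hh^2 * -1 else 0)"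
    by (rule RS[where q=3, OF R5]) (simp_all add: all16 xz_def ee_def bitq_def pix_def r2hh numeral_3_eq_3[symmetric] mult_ac)
  show ?thesis by (rule Reach_cong[OF R6]) (simp add: pat_pm2_def all16 xz_def ee_def bitq_def pix_def r2hh numeral_3_eq_3[symmetric] mult_ac)
qed

definition pat_pp3 :: "nat \<Rightarrow> real" where
  "pat_pp3 = (\<lambda>x. if x = 0 then 1 else if x = 6 then 1 else if x = 10 then 1 else if x = 12 then 1 else 0)"


lemma st_pp3: "Reach (\<lambda>x. 1 * hh^2 * complex_of_real (pat_pp3 x))"
proof -
  have R0: "Reach (\<lambda>x. if x = 0 then hh * 1 else if x = 8 then hh * 1 else 0)"
    by (rule RH[where q=0, OF Reach_id]) (simp_all add: all16 xz_def ee_def bitq_def pix_def r2hh numeral_3_eq_3[symmetric])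
  have R1: "Reach (\<lambda>x. if x = 0 then hh^2 * 1 else if x = 4 then hh^2 * 1 else if x = 8 then hh^2 * 1 else if x = 12 then hh^2 * 1 else 0)"
    by (rule RH[where q=1, OF R0]) (simp_all add: all16 xz_def ee_def bitq_def pix_def r2hh numeral_3_eq_3[symmetric])
  have R2: "Reach (\<lambda>x. if x = 0 then hh^2 * 1 else if x = 4 then hh^2 * 1 else if x = 10 then hh^2 * 1 else if x = 14 then hh^2 * 1 else 0)"
    by (rule RC[where c=0 and t=2, OF R1]) (simp_all add: all16 xz_def ee_def bitq_def pix_def r2hh numeral_3_eq_3[symmetric] mult_ac)
  have R3: "Reach (\<lambda>x. if x = 0 then hh^2 * 1 else if x = 6 then hh^2 * 1 else if x = 10 then hh^2 * 1 else if x = 12 then hh^2 * 1 else 0)"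
    by (rule RC[where c=1 and t=2, OF R2]) (simp_all add: all16 xz_def ee_def bitq_def pix_def r2hh numeral_3_eq_3[symmetric] mult_ac)
  show ?thesis by (rule Reach_cong[OF R3]) (simp add: pat_pp3_def all16 xz_def ee_def bitq_def pix_def r2hh numeral_3_eq_3[symmetric] mult_ac)
qed

definition pat_pm3 :: "nat \<Rightarrow> real" where
  "pat_pm3 = (\<lambda>x. if x = 0 then 1 else if x = 6 then -1 else if x = 10 then -1 else if x = 12 then -1 else 0)"


lemma st_pm3: "Reach (\<lambda>x. 1 * hh^2 * complex_of_real (pat_pm3 x))"
proof -
  have R0: "Reach (\<lambda>x. if x = 0 then hh * 1 else if x = 8 then hh * 1 else 0)"
    by (rule RH[where q=0, OF Reach_id]) (simp_all add: all16 xz_def ee_def bitq_def pix_def r2hh numeral_3_eq_3[symmetric])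
  have R1: "Reach (\<lambda>x. if x = 0 then hh^2 * 1 else if x = 4 then hh^2 * 1 else if x = 8 then hh^2 * 1 else if x = 12 then hh^2 * 1 else 0)"
    by (rule RH[where q=1, OF R0]) (simp_all add: all16 xz_def ee_def bitq_def pix_def r2hh numeral_3_eq_3[symmetric])
  have R2: "Reach (\<lambda>x. if x = 0 then hh^2 * 1 else if x = 4 then hh^2 * 1 else if x = 10 then hh^2 * 1 else if x = 14 then hh^2 * 1 else 0)"
    by (rule RC[where c=0 and t=2, OF R1]) (simp_all add: all16 xz_def ee_def bitq_def pix_def r2hh numeral_3_eq_3[symmetric] mult_ac)
  have R3: "Reach (\<lambda>x. if x = 0 then hh^2 * 1 else if x = 6 then hh^2 * 1 else if x = 10 then hh^2 * 1 else if x = 12 then hh^2 * 1 else 0)"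
    by (rule RC[where c=1 and t=2, OF R2]) (simp_all add: all16 xz_def ee_def bitq_def pix_def r2hh numeral_3_eq_3[symmetric] mult_ac)
  have R4: "Reach (\<lambda>x. if x = 0 then hh^2 * 1 else if x = 6 then hh^2 * 1 else if x = 10 then hh^2 * \<i> else if x = 12 then hh^2 * \<i> else 0)"
    by (rule RS[where q=0, OF R3]) (simp_all add: all16 xz_def ee_def bitq_def pix_def r2hh numeral_3_eq_3[symmetric] mult_ac)
  have R5: "Reach (\<lambda>x. if x = 0 then hh^2 * 1 else if x = 6 then hh^2 * \<i> else if x = 10 then hh^2 * \<i> else if x = 12 then hh^2 * -1 else 0)"
    by (rule RS[where q=1, OF R4]) (simp_all add: all16 xz_def ee_def bitq_def pix_def r2hh numeral_3_eq_3[symmetric] mult_ac)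
  have R6: "Reach (\<lambda>x. if x = 0 then hh^2 * 1 else if x = 6 then hh^2 * -1 else if x = 10 then hh^2 * -1 else if x = 12 then hh^2 * -1 else 0)"
    by (rule RS[where q=2, OF R5]) (simp_all add: all16 xz_def ee_def bitq_def pix_def r2hh numeral_3_eq_3[symmetric] mult_ac)
  show ?thesis by (rule Reach_cong[OF R6]) (simp add: pat_pm3_def all16 xz_def ee_def bitq_def pix_def r2hh numeral_3_eq_3[symmetric] mult_ac)
qed

definition pat_qp :: "nat \<Rightarrow> real" where
  "pat_qp = (\<lambda>x. if x = 1 then 1 else if x = 2 then 1 else if x = 4 then 1 else if x = 7 then 1 else if x = 8 then 1 else if x = 11 then 1 else if x = 13 then 1 else if x = 14 then 1 else 0)"


lemma st_qp: "Reach (\<lambda>x. 1 * hh^3 * complex_of_real (pat_qp x))"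
proof -
  have R0: "Reach (\<lambda>x. if x = 1 then 1 else 0)"
    by (rule RX[where q=3, OF Reach_id]) (simp_all add: all16 xz_def ee_def bitq_def pix_def r2hh numeral_3_eq_3[symmetric] mult_ac)
  have R1: "Reach (\<lambda>x. if x = 1 then hh * 1 else if x = 9 then hh * 1 else 0)"
    by (rule RH[where q=0, OF R0]) (simp_all add: all16 xz_def ee_def bitq_def pix_def r2hh numeral_3_eq_3[symmetric])
  have R2: "Reach (\<lambda>x. if x = 1 then hh^2 * 1 else if x = 5 then hh^2 * 1 else if x = 9 then hh^2 * 1 else if x = 13 then hh^2 * 1 else 0)"
    by (rule RH[where q=1, OF R1]) (simp_all add: all16 xz_def ee_def bitq_def pix_def r2hh numeral_3_eq_3[symmetric])
  have R3: "Reach (\<lambda>x. if x = 1 then hh^3 * 1 else if x = 3 then hh^3 * 1 else if x = 5 then hh^3 * 1 else if x = 7 then hh^3 * 1 else if x = 9 then hh^3 * 1 else if x = 11 then hh^3 * 1 else if x = 13 then hh^3 * 1 else if x = 15 then hh^3 * 1 else 0)"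
    by (rule RH[where q=2, OF R2]) (simp_all add: all16 xz_def ee_def bitq_def pix_def r2hh numeral_3_eq_3[symmetric])
  have R4: "Reach (\<lambda>x. if x = 1 then hh^3 * 1 else if x = 3 then hh^3 * 1 else if x = 5 then hh^3 * 1 else if x = 7 then hh^3 * 1 else if x = 8 then hh^3 * 1 else if x = 10 then hh^3 * 1 else if x = 12 then hh^3 * 1 else if x = 14 then hh^3 * 1 else 0)"
    by (rule RC[where c=0 and t=3, OF R3]) (simp_all add: all16 xz_def ee_def bitq_def pix_def r2hh numeral_3_eq_3[symmetric] mult_ac)
  have R5: "Reach (\<lambda>x. if x = 1 then hh^3 * 1 else if x = 3 then hh^3 * 1 else if x = 4 then hh^3 * 1 else if x = 6 then hh^3 * 1 else if x = 8 then hh^3 * 1 else if x = 10 then hh^3 * 1 else if x = 13 then hh^3 * 1 else if x = 15 then hh^3 * 1 else 0)"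
    by (rule RC[where c=1 and t=3, OF R4]) (simp_all add: all16 xz_def ee_def bitq_def pix_def r2hh numeral_3_eq_3[symmetric] mult_ac)
  have R6: "Reach (\<lambda>x. if x = 1 then hh^3 * 1 else if x = 2 then hh^3 * 1 else if x = 4 then hh^3 * 1 else if x = 7 then hh^3 * 1 else if x = 8 then hh^3 * 1 else if x = 11 then hh^3 * 1 else if x = 13 then hh^3 * 1 else if x = 14 then hh^3 * 1 else 0)"
    by (rule RC[where c=2 and t=3, OF R5]) (simp_all add: all16 xz_def ee_def bitq_def pix_def r2hh numeral_3_eq_3[symmetric] mult_ac)
  show ?thesis by (rule Reach_cong[OF R6]) (simp add: pat_qp_def all16 xz_def ee_def bitq_def pix_def r2hh numeral_3_eq_3[symmetric] mult_ac)
qed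

definition pat_qm :: "nat \<Rightarrow> real" where
  "pat_qm = (\<lambda>x. if x = 1 then 1 else if x = 2 then 1 else if x = 4 then 1 else if x = 7 then -1 else if x = 8 then 1 else if x = 11 then -1 else if x = 13 then -1 else if x = 14 then -1 else 0)"


lemma st_qm: "Reach (\<lambda>x. \<i> * hh^3 * complex_of_real (pat_qm x))"
proof -
  have R0: "Reach (\<lambda>x. if x = 1 then 1 else 0)"
    by (rule RX[where q=3, OF Reach_id]) (simp_all add: all16 xz_def ee_def bitq_def pix_def r2hh numeral_3_eq_3[symmetric] mult_ac)
  have R1: "Reach (\<lambda>x. if x = 1 then hh * 1 else if x = 9 then hh * 1 else 0)"
    by (rule RH[where q=0, OF R0]) (simp_all add: all16 xz_def ee_def bitq_def pix_def r2hh numeral_3_eq_3[symmetric])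
  have R2: "Reach (\<lambda>x. if x = 1 then hh^2 * 1 else if x = 5 then hh^2 * 1 else if x = 9 then hh^2 * 1 else if x = 13 then hh^2 * 1 else 0)"
    by (rule RH[where q=1, OF R1]) (simp_all add: all16 xz_def ee_def bitq_def pix_def r2hh numeral_3_eq_3[symmetric])
  have R3: "Reach (\<lambda>x. if x = 1 then hh^3 * 1 else if x = 3 then hh^3 * 1 else if x = 5 then hh^3 * 1 else if x = 7 then hh^3 * 1 else if x = 9 then hh^3 * 1 else if x = 11 then hh^3 * 1 else if x = 13 then hh^3 * 1 else if x = 15 then hh^3 * 1 else 0)"
    by (rule RH[where q=2, OF R2]) (simp_all add: all16 xz_def ee_def bitq_def pix_def r2hh numeral_3_eq_3[symmetric])
  have R4: "Reach (\<lambda>x. if x = 1 then hh^3 * 1 else if x = 3 then hh^3 * 1 else if x = 5 then hh^3 * 1 else if x = 7 then hh^3 * 1 else if x = 8 then hh^3 * 1 else if x = 10 then hh^3 * 1 else if x = 12 then hh^3 * 1 else if x = 14 then hh^3 * 1 else 0)"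
    by (rule RC[where c=0 and t=3, OF R3]) (simp_all add: all16 xz_def ee_def bitq_def pix_def r2hh numeral_3_eq_3[symmetric] mult_ac)
  have R5: "Reach (\<lambda>x. if x = 1 then hh^3 * 1 else if x = 3 then hh^3 * 1 else if x = 4 then hh^3 * 1 else if x = 6 then hh^3 * 1 else if x = 8 then hh^3 * 1 else if x = 10 then hh^3 * 1 else if x = 13 then hh^3 * 1 else if x = 15 then hh^3 * 1 else 0)"
    by (rule RC[where c=1 and t=3, OF R4]) (simp_all add: all16 xz_def ee_def bitq_def pix_def r2hh numeral_3_eq_3[symmetric] mult_ac)
  have R6: "Reach (\<lambda>x. if x = 1 then hh^3 * 1 else if x = 2 then hh^3 * 1 else if x = 4 then hh^3 * 1 else if x = 7 then hh^3 * 1 else if x = 8 then hh^3 * 1 else if x = 11 then hh^3 * 1 else if x = 13 then hh^3 * 1 else if x = 14 then hh^3 * 1 else 0)"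
    by (rule RC[where c=2 and t=3, OF R5]) (simp_all add: all16 xz_def ee_def bitq_def pix_def r2hh numeral_3_eq_3[symmetric] mult_ac)
  have R7: "Reach (\<lambda>x. if x = 1 then hh^3 * 1 else if x = 2 then hh^3 * 1 else if x = 4 then hh^3 * 1 else if x = 7 then hh^3 * 1 else if x = 8 then hh^3 * \<i> else if x = 11 then hh^3 * \<i> else if x = 13 then hh^3 * \<i> else if x = 14 then hh^3 * \<i> else 0)"
    by (rule RS[where q=0, OF R6]) (simp_all add: all16 xz_def ee_def bitq_def pix_def r2hh numeral_3_eq_3[symmetric] mult_ac)
  have R8: "Reach (\<lambda>x. if x = 1 then hh^3 * 1 else if x = 2 then hh^3 * 1 else if x = 4 then hh^3 * \<i> else if x = 7 then hh^3 * \<i> else if x = 8 then hh^3 * \<i> else if x = 11 then hh^3 * \<i> else if x = 13 then hh^3 * -1 else if x = 14 then hh^3 * -1 else 0)"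
    by (rule RS[where q=1, OF R7]) (simp_all add: all16 xz_def ee_def bitq_def pix_def r2hh numeral_3_eq_3[symmetric] mult_ac)
  have R9: "Reach (\<lambda>x. if x = 1 then hh^3 * 1 else if x = 2 then hh^3 * \<i> else if x = 4 then hh^3 * \<i> else if x = 7 then hh^3 * -1 else if x = 8 then hh^3 * \<i> else if x = 11 then hh^3 * -1 else if x = 13 then hh^3 * -1 else if x = 14 then hh^3 * -\<i> else 0)"
    by (rule RS[where q=2, OF R8]) (simp_all add: all16 xz_def ee_def bitq_def pix_def r2hh numeral_3_eq_3[symmetric] mult_ac)
  have R10: "Reach (\<lambda>x. if x = 1 then hh^3 * \<i> else if x = 2 then hh^3 * \<i> else if x = 4 then hh^3 * \<i> else if x = 7 then hh^3 * -\<i> else if x = 8 then hh^3 * \<i> else if x = 11 then hh^3 * -\<i> else if x = 13 then hh^3 * -\<i> else if x = 14 then hh^3 * -\<i> else 0)"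
    by (rule RS[where q=3, OF R9]) (simp_all add: all16 xz_def ee_def bitq_def pix_def r2hh numeral_3_eq_3[symmetric] mult_ac)
  show ?thesis by (rule Reach_cong[OF R10]) (simp add: pat_qm_def all16 xz_def ee_def bitq_def pix_def r2hh numeral_3_eq_3[symmetric] mult_ac)
qed

lemma hh_sq: "hh * cnj hh = complex_of_real (1/2)" "hh^2 * cnj (hh^2) = complex_of_real (1/4)"
  "hh^3 * cnj (hh^3) = complex_of_real (1/8)"
proof -
  have h1: "hh * cnj hh = complex_of_real (1/2)"
  proof -
    have c: "cnj hh = hh" by (simp add: hh_def)
    have "hh * hh = complex_of_real (1 / sqrt 2 * (1 / sqrt 2))" unfolding hh_def by (rule of_real_mult[symmetric])
    also have "1 / sqrt 2 * (1 / sqrt 2) = 1 / (sqrt 2 * sqrt 2)" by simp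
    also have "sqrt 2 * sqrt 2 = (2::real)" by simp
    finally show ?thesis unfolding c by simp
  qed
  show "hh * cnj hh = complex_of_real (1/2)" by (rule h1)
  have "hh^2 * cnj (hh^2) = (hh * cnj hh) * (hh * cnj hh)" by (simp add: power2_eq_square mult_ac)
  then show "hh^2 * cnj (hh^2) = complex_of_real (1/4)" unfolding h1 by simp
  have "hh^3 * cnj (hh^3) = (hh * cnj hh) * (hh * cnj hh) * (hh * cnj hh)" by (simp add: power3_eq_cube mult_ac)
  then show "hh^3 * cnj (hh^3) = complex_of_real (1/8)" unfolding h1 by simp
qed

lemma k1: "1 * cnj 1 = (1::complex)" by simp
lemma ki: "\<i> * cnj \<i> = 1" by simp
lemma s1: "1 * cnj 1 = complex_of_real 1" by simp

lemma stab_entry: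
  assumes R: "Reach (\<lambda>x. \<kappa> * s * complex_of_real (pat x))" and k: "\<kappa> * cnj \<kappa> = 1"
    and sr: "s * cnj s = complex_of_real r"
  shows "\<exists>C. C \<in> clifford4 \<and> (\<forall>a<16. \<forall>b<16. stab_dm C a b = complex_of_real (r * pat a * pat b))"
proof -
  obtain C where C: "C \<in> clifford4" "\<forall>x<16. C x 0 = \<kappa> * s * complex_of_real (pat x)"
    using R unfolding Reach_def by blast
  have "stab_dm C a b = complex_of_real (r * pat a * pat b)" if "a < 16" "b < 16" for a b
  proof -
    have "stab_dm C a b = (\<kappa> * s * complex_of_real (pat a)) * cnj (\<kappa> * s * complex_of_real (pat b))"
      using C(2) that by (simp add: stab_dm_def)
    also have "\<dots> = (\<kappa> * cnj \<kappa>) * (s * cnj s) * (complex_of_real (pat a) * complex_of_real (pat b))"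
      by (simp add: mult_ac)
    also have "\<dots> = complex_of_real (r * pat a * pat b)" unfolding k sr by simp
    finally show ?thesis .
  qed
  then show ?thesis using C(1) by blast
qed

definition wts :: "real \<Rightarrow> nat \<Rightarrow> real" where
  "wts g = (\<lambda>k. if k = 0 then g*(2*g-1) else if k = 1 then (1-g)^3/2 else if k = 2 then (1-g)^3/2 else if k = 3 then (1-g)^3/2 else if k = 4 then (1-g)^3/2 else if k = 5 then (1-g)*(2*g-1)/2 else if k = 6 then (1-g)*(2*g-1)/2 else if k = 7 then (1-g)*(2*g-1)/2 else if k = 8 then (1-g)*(2*g-1)/2 else if k = 9 then (1-g)*(2*g-1)/2 else if k = 10 then (1-g)*(2*g-1)/2 else if k = 11 then g*(1-g)^2/2 else if k = 12 then g*(1-g)^2/2 else if k = 13 then g*(1-g)^2/2 else if k = 14 then g*(1-g)^2/2 else if k = 15 then g*(1-g)^2/2 else if k = 16 then g*(1-g)^2/2 else if k = 17 then g*(1-g)^2/2 else if k = 18 then g*(1-g)^2/2 else if k = 19 then (1-g)^3 else if k = 20 then (1-g)^3 else 0)"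

definition RM :: "nat \<Rightarrow> nat \<Rightarrow> nat \<Rightarrow> real" where
  "RM = (\<lambda>k a b. if k = 0 then 1 * pat_e0 a * pat_e0 b else if k = 1 then 1 * pat_b0 a * pat_b0 b else if k = 2 then 1 * pat_b1 a * pat_b1 b else if k = 3 then 1 * pat_b2 a * pat_b2 b else if k = 4 then 1 * pat_b3 a * pat_b3 b else if k = 5 then 1/2 * pat_pr01 a * pat_pr01 b else if k = 6 then 1/2 * pat_pr02 a * pat_pr02 b else if k = 7 then 1/2 * pat_pr03 a * pat_pr03 b else if k = 8 then 1/2 * pat_pr12 a * pat_pr12 b else if k = 9 then 1/2 * pat_pr13 a * pat_pr13 b else if k = 10 then 1/2 * pat_pr23 a * pat_pr23 b else if k = 11 then 1/4 * pat_pp0 a * pat_pp0 b else if k = 12 then 1/4 * pat_pm0 a * pat_pm0 b else if k = 13 then 1/4 * pat_pp1 a * pat_pp1 b else if k = 14 then 1/4 * pat_pm1 a * pat_pm1 b else if k = 15 then 1/4 * pat_pp2 a * pat_pp2 b else if k = 16 then 1/4 * pat_pm2 a * pat_pm2 b else if k = 17 then 1/4 * pat_pp3 a * pat_pp3 b else if k = 18 then 1/4 * pat_pm3 a * pat_pm3 b else if k = 19 then 1/8 * pat_qp a * pat_qp b else if k = 20 then 1/8 * pat_qm a * pat_qm b else 0)"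

lemma sumN: "(\<Sum>k<21. (f::nat\<Rightarrow>'a::comm_monoid_add) k) = f 0 + f 1 + f 2 + f 3 + f 4 + f 5 + f 6 + f 7 + f 8 + f 9 + f 10 + f 11 + f 12 + f 13 + f 14 + f 15 + f 16 + f 17 + f 18 + f 19 + f 20"
  by (simp add: numeral_eq_Suc)

lemma allN: "(\<forall>k<21. P k) \<longleftrightarrow> P 0 \<and> P 1 \<and> P 2 \<and> P 3 \<and> P 4 \<and> P 5 \<and> P 6 \<and> P 7 \<and> P 8 \<and> P 9 \<and> P 10 \<and> P 11 \<and> P 12 \<and> P 13 \<and> P 14 \<and> P 15 \<and> P 16 \<and> P 17 \<and> P 18 \<and> P 19 \<and> P (20::nat)"
proof
  assume h: "P 0 \<and> P 1 \<and> P 2 \<and> P 3 \<and> P 4 \<and> P 5 \<and> P 6 \<and> P 7 \<and> P 8 \<and> P 9 \<and> P 10 \<and> P 11 \<and> P 12 \<and> P 13 \<and> P 14 \<and> P 15 \<and> P 16 \<and> P 17 \<and> P 18 \<and> P 19 \<and> P (20::nat)"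
  show "\<forall>k<21. P k"
  proof (intro allI impI)
    fix k :: nat assume "k < 21"
    then have "k = 0 \<or> k = 1 \<or> k = 2 \<or> k = 3 \<or> k = 4 \<or> k = 5 \<or> k = 6 \<or> k = 7 \<or> k = 8 \<or> k = 9 \<or> k = 10 \<or> k = 11 \<or> k = 12 \<or> k = 13 \<or> k = 14 \<or> k = 15 \<or> k = 16 \<or> k = 17 \<or> k = 18 \<or> k = 19 \<or> k = 20" by (simp add: numeral_eq_Suc less_Suc_eq)
    then show "P k" using h by (elim disjE) simp_all
  qed
qed simp

lemma if_dir:
  assumes g: "1/2 \<le> g" "g \<le> 1"
  shows "in_stabilizer_polytope (rho43 g)"
proof -
  obtain C0 where C0: "C0 \<in> clifford4" "\<forall>a<16. \<forall>b<16. stab_dm C0 a b = complex_of_real (1 * pat_e0 a * pat_e0 b)"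
    using stab_entry[OF st_e0 k1 s1] by blast
  obtain C1 where C1: "C1 \<in> clifford4" "\<forall>a<16. \<forall>b<16. stab_dm C1 a b = complex_of_real (1 * pat_b0 a * pat_b0 b)"
    using stab_entry[OF st_b0 k1 s1] by blast
  obtain C2 where C2: "C2 \<in> clifford4" "\<forall>a<16. \<forall>b<16. stab_dm C2 a b = complex_of_real (1 * pat_b1 a * pat_b1 b)"
    using stab_entry[OF st_b1 k1 s1] by blast
  obtain C3 where C3: "C3 \<in> clifford4" "\<forall>a<16. \<forall>b<16. stab_dm C3 a b = complex_of_real (1 * pat_b2 a * pat_b2 b)"
    using stab_entry[OF st_b2 k1 s1] by blast
  obtain C4 where C4: "C4 \<in> clifford4" "\<forall>a<16. \<forall>b<16. stab_dm C4 a b = complex_of_real (1 * pat_b3 a * pat_b3 b)"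
    using stab_entry[OF st_b3 k1 s1] by blast
  obtain C5 where C5: "C5 \<in> clifford4" "\<forall>a<16. \<forall>b<16. stab_dm C5 a b = complex_of_real (1/2 * pat_pr01 a * pat_pr01 b)"
    using stab_entry[OF st_pr01 k1 hh_sq(1)] by blast
  obtain C6 where C6: "C6 \<in> clifford4" "\<forall>a<16. \<forall>b<16. stab_dm C6 a b = complex_of_real (1/2 * pat_pr02 a * pat_pr02 b)"
    using stab_entry[OF st_pr02 k1 hh_sq(1)] by blast
  obtain C7 where C7: "C7 \<in> clifford4" "\<forall>a<16. \<forall>b<16. stab_dm C7 a b = complex_of_real (1/2 * pat_pr03 a * pat_pr03 b)"
    using stab_entry[OF st_pr03 k1 hh_sq(1)] by blast
  obtain C8 where C8: "C8 \<in> clifford4" "\<forall>a<16. \<forall>b<16. stab_dm C8 a b = complex_of_real (1/2 * pat_pr12 a * pat_pr12 b)"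
    using stab_entry[OF st_pr12 k1 hh_sq(1)] by blast
  obtain C9 where C9: "C9 \<in> clifford4" "\<forall>a<16. \<forall>b<16. stab_dm C9 a b = complex_of_real (1/2 * pat_pr13 a * pat_pr13 b)"
    using stab_entry[OF st_pr13 k1 hh_sq(1)] by blast
  obtain C10 where C10: "C10 \<in> clifford4" "\<forall>a<16. \<forall>b<16. stab_dm C10 a b = complex_of_real (1/2 * pat_pr23 a * pat_pr23 b)"
    using stab_entry[OF st_pr23 k1 hh_sq(1)] by blast
  obtain C11 where C11: "C11 \<in> clifford4" "\<forall>a<16. \<forall>b<16. stab_dm C11 a b = complex_of_real (1/4 * pat_pp0 a * pat_pp0 b)"
    using stab_entry[OF st_pp0 k1 hh_sq(2)] by blast
  obtain C12 where C12: "C12 \<in> clifford4" "\<forall>a<16. \<forall>b<16. stab_dm C12 a b = complex_of_real (1/4 * pat_pm0 a * pat_pm0 b)"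
    using stab_entry[OF st_pm0 k1 hh_sq(2)] by blast
  obtain C13 where C13: "C13 \<in> clifford4" "\<forall>a<16. \<forall>b<16. stab_dm C13 a b = complex_of_real (1/4 * pat_pp1 a * pat_pp1 b)"
    using stab_entry[OF st_pp1 k1 hh_sq(2)] by blast
  obtain C14 where C14: "C14 \<in> clifford4" "\<forall>a<16. \<forall>b<16. stab_dm C14 a b = complex_of_real (1/4 * pat_pm1 a * pat_pm1 b)"
    using stab_entry[OF st_pm1 k1 hh_sq(2)] by blast
  obtain C15 where C15: "C15 \<in> clifford4" "\<forall>a<16. \<forall>b<16. stab_dm C15 a b = complex_of_real (1/4 * pat_pp2 a * pat_pp2 b)"
    using stab_entry[OF st_pp2 k1 hh_sq(2)] by blast
  obtain C16 where C16: "C16 \<in> clifford4" "\<forall>a<16. \<forall>b<16. stab_dm C16 a b = complex_of_real (1/4 * pat_pm2 a * pat_pm2 b)"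
    using stab_entry[OF st_pm2 k1 hh_sq(2)] by blast
  obtain C17 where C17: "C17 \<in> clifford4" "\<forall>a<16. \<forall>b<16. stab_dm C17 a b = complex_of_real (1/4 * pat_pp3 a * pat_pp3 b)"
    using stab_entry[OF st_pp3 k1 hh_sq(2)] by blast
  obtain C18 where C18: "C18 \<in> clifford4" "\<forall>a<16. \<forall>b<16. stab_dm C18 a b = complex_of_real (1/4 * pat_pm3 a * pat_pm3 b)"
    using stab_entry[OF st_pm3 k1 hh_sq(2)] by blast
  obtain C19 where C19: "C19 \<in> clifford4" "\<forall>a<16. \<forall>b<16. stab_dm C19 a b = complex_of_real (1/8 * pat_qp a * pat_qp b)"
    using stab_entry[OF st_qp k1 hh_sq(3)] by blast
  obtain C20 where C20: "C20 \<in> clifford4" "\<forall>a<16. \<forall>b<16. stab_dm C20 a b = complex_of_real (1/8 * pat_qm a * pat_qm b)"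
    using stab_entry[OF st_qm ki hh_sq(3)] by blast
  define sig :: "nat \<Rightarrow> op4" where "sig = (\<lambda>k. if k = 0 then stab_dm C0 else if k = 1 then stab_dm C1 else if k = 2 then stab_dm C2 else if k = 3 then stab_dm C3 else if k = 4 then stab_dm C4 else if k = 5 then stab_dm C5 else if k = 6 then stab_dm C6 else if k = 7 then stab_dm C7 else if k = 8 then stab_dm C8 else if k = 9 then stab_dm C9 else if k = 10 then stab_dm C10 else if k = 11 then stab_dm C11 else if k = 12 then stab_dm C12 else if k = 13 then stab_dm C13 else if k = 14 then stab_dm C14 else if k = 15 then stab_dm C15 else if k = 16 then stab_dm C16 else if k = 17 then stab_dm C17 else if k = 18 then stab_dm C18 else if k = 19 then stab_dm C19 else if k = 20 then stab_dm C20 else id4)"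
  have ent: "sig k a b = complex_of_real (RM k a b)" if "k < 21" "a < 16" "b < 16" for k a b
  proof -
    have "k = 0 \<or> k = 1 \<or> k = 2 \<or> k = 3 \<or> k = 4 \<or> k = 5 \<or> k = 6 \<or> k = 7 \<or> k = 8 \<or> k = 9 \<or> k = 10 \<or> k = 11 \<or> k = 12 \<or> k = 13 \<or> k = 14 \<or> k = 15 \<or> k = 16 \<or> k = 17 \<or> k = 18 \<or> k = 19 \<or> k = 20" using that(1) by (simp add: numeral_eq_Suc less_Suc_eq)
    then show ?thesis using that C0(2) C1(2) C2(2) C3(2) C4(2) C5(2) C6(2) C7(2) C8(2) C9(2) C10(2) C11(2) C12(2) C13(2) C14(2) C15(2) C16(2) C17(2) C18(2) C19(2) C20(2) by (elim disjE) (simp_all add: sig_def RM_def)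
  qed
  have mem: "\<forall>k<21. 0 \<le> wts g k \<and> sig k \<in> pure_stabilizer_states"
    unfolding allN using g C0(1) C1(1) C2(1) C3(1) C4(1) C5(1) C6(1) C7(1) C8(1) C9(1) C10(1) C11(1) C12(1) C13(1) C14(1) C15(1) C16(1) C17(1) C18(1) C19(1) C20(1)
    by (simp add: wts_def sig_def pure_stabilizer_states_def mult_nonneg_nonneg)
  have sw: "(\<Sum>k<21. wts g k) = 1"
    unfolding sumN by (simp add: wts_def algebra_simps power2_eq_square power3_eq_cube)
  have rr: "rhoR g a b = (\<Sum>k<21. wts g k * RM k a b)" if "a < 16" "b < 16" for a b
    using that unfolding sumN
    apply -
    apply (drule less16_cases, drule less16_cases)
    apply (elim disjE)
    apply (simp_all add: wts_def RM_def rhoR_def wt_vals pat_e0_def pat_b0_def pat_b1_def pat_b2_def pat_b3_def pat_pr01_def pat_pr02_def pat_pr03_def pat_pr12_def pat_pr13_def pat_pr23_def pat_pp0_def pat_pm0_def pat_pp1_def pat_pm1_def pat_pp2_def pat_pm2_def pat_pp3_def pat_pm3_def pat_qp_def pat_qm_def)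
    apply (simp_all add: algebra_simps power2_eq_square power3_eq_cube)
    done
  have eqs: "\<forall>a<16. \<forall>b<16. rho43 g a b = (\<Sum>k<21. complex_of_real (wts g k) * sig k a b)"
  proof (intro allI impI)
    fix a b :: nat assume ab: "a < 16" "b < 16"
    have "(\<Sum>k<21. complex_of_real (wts g k) * sig k a b) = (\<Sum>k<21. complex_of_real (wts g k * RM k a b))"
      by (rule sum.cong) (simp_all add: ent ab)
    also have "\<dots> = complex_of_real (rhoR g a b)" unfolding rr[OF ab] by (simp add: of_real_sum)
    also have "\<dots> = rho43 g a b" using rho_closed[of g a b] g ab by simp
    finally show "rho43 g a b = (\<Sum>k<21. complex_of_real (wts g k) * sig k a b)" by simp
  qed
  show ?thesis unfolding in_stabilizer_polytope_def using mem sw eqs by blast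
qed

lemma polytope_functional:
  fixes L :: "op4 \<Rightarrow> complex"
  assumes cong: "\<And>M M'. (\<And>a b. a<16 \<Longrightarrow> b<16 \<Longrightarrow> M a b = M' a b) \<Longrightarrow> L M = L M'"
    and lin: "\<And>(n::nat) (w::nat \<Rightarrow> real) (\<sigma>::nat \<Rightarrow> op4). L (\<lambda>a b. \<Sum>k<n. complex_of_real (w k) * \<sigma> k a b) = (\<Sum>k<n. complex_of_real (w k) * L (\<sigma> k))"
    and st: "\<And>C. C \<in> clifford4 \<Longrightarrow> \<exists>r\<ge>0. L (stab_dm C) = complex_of_real r"
    and P: "in_stabilizer_polytope \<rho>"
  shows "\<exists>t\<ge>0. L \<rho> = complex_of_real t"
proof -
  obtain n :: nat and w :: "nat \<Rightarrow> real" and \<sigma> :: "nat \<Rightarrow> op4" where h: "\<forall>k<n. 0 \<le> w k \<and> \<sigma> k \<in> pure_stabilizer_states"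
    "\<forall>a<16. \<forall>b<16. \<rho> a b = (\<Sum>k<n. complex_of_real (w k) * \<sigma> k a b)"
  proof -
    from P obtain n :: nat and w :: "nat \<Rightarrow> real" and \<sigma> :: "nat \<Rightarrow> op4" where "(\<forall>k<n. 0 \<le> w k \<and> \<sigma> k \<in> pure_stabilizer_states) \<and>
        (\<Sum>k<n. w k) = 1 \<and>
        (\<forall>a<16. \<forall>b<16. \<rho> a b = (\<Sum>k<n. complex_of_real (w k) * \<sigma> k a b))"
      unfolding in_stabilizer_polytope_def by (elim exE) (erule that)
    then show ?thesis using that by blast
  qed
  define rr where "rr k = Re (L (\<sigma> k))" for k
  have rk: "L (\<sigma> k) = complex_of_real (rr k) \<and> 0 \<le> rr k" if kn: "k < n" for k
  proof -
    obtain C where C: "C \<in> clifford4" "\<sigma> k = stab_dm C" using h(1) kn unfolding pure_stabilizer_states_def by auto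
    obtain r where "r \<ge> 0" "L (stab_dm C) = complex_of_real r" using st[OF C(1)] by (elim exE conjE)
    then have "r \<ge> 0" "L (\<sigma> k) = complex_of_real r" using C(2) by simp_all
    then show ?thesis unfolding rr_def by simp
  qed
  have "L \<rho> = L (\<lambda>a b. \<Sum>k<n. complex_of_real (w k) * \<sigma> k a b)"
    by (rule cong) (use h(2) in auto)
  also have "\<dots> = (\<Sum>k<n. complex_of_real (w k) * L (\<sigma> k))" by (rule lin)
  also have "\<dots> = (\<Sum>k<n. complex_of_real (w k * rr k))" by (rule sum.cong) (simp_all add: rk)
  also have "\<dots> = complex_of_real (\<Sum>k<n. w k * rr k)" by (simp add: of_real_sum)
  finally have "L \<rho> = complex_of_real (\<Sum>k<n. w k * rr k)" .
  moreover have "0 \<le> (\<Sum>k<n. w k * rr k)" by (rule sum_nonneg) (use h(1) rk in auto)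
  ultimately show ?thesis by blast
qed

theorem propositionS3:
  fixes \<gamma> :: real
  assumes "0 \<le> \<gamma>" and "\<gamma> \<le> 1"
  shows "in_stabilizer_polytope (rho43 \<gamma>) \<longleftrightarrow> \<gamma> \<ge> 1/2"
proof
  assume P: "in_stabilizer_polytope (rho43 \<gamma>)"
  obtain t where t: "t \<ge> 0" "Lw (rho43 \<gamma>) = complex_of_real t"
    using polytope_functional[OF Lw_cong Lw_lin Lw_stab P] by blast
  have "complex_of_real (3*\<gamma>*(2*\<gamma>-1)) = complex_of_real t" using t Lw_rho[OF assms] by simp
  then have e: "3*\<gamma>*(2*\<gamma>-1) = t" using of_real_eq_iff by blast
  show "\<gamma> \<ge> 1/2"
  proof (cases "\<gamma> = 0")
    case True
    obtain t' where t': "t' \<ge> 0" "Lz (rho43 \<gamma>) = complex_of_real t'"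
      using polytope_functional[OF Lz_cong Lz_lin Lz_stab P] by blast
    then have "complex_of_real (-2) = complex_of_real t'" using Lz_rho0 True by simp
    then have "-2 = t'" using of_real_eq_iff by blast
    then show ?thesis using t'(1) by simp
  next
    case False
    then have "\<gamma> > 0" using assms(1) by simp
    moreover have "0 \<le> 3*\<gamma>*(2*\<gamma>-1)" using e t(1) by simp
    ultimately have "0 \<le> 2*\<gamma>-1" by (simp add: zero_le_mult_iff)
    then show ?thesis by simp
  qed
next
  assume "\<gamma> \<ge> 1/2"
  then show "in_stabilizer_polytope (rho43 \<gamma>)" using if_dir assms(2) by blast
qed

end
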